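(* Let $\mathcal M$ and $\mathcal N$ be von Neumann algebras and suppose that the completely bounded bilinear operator $\phi:\mathcal M\times\mathcal M\to\mathcal N$ has a factorization of type B. Then there exist continuous completely positive bilinear maps $\phi_k:\mathcal M\times\mathcal M\to\mathcal N$, $1\le k\le 4$, such that $\phi=(\phi_1-\phi_2)+i(\phi_3-\phi_4)$.
   Context: A factorization of type B of $\phi$ consists of completely bounded linear maps $\psi_j,\theta_j:\mathcal M\to\mathcal N$, $j\in\Lambda$, and a constant $K$ such that $\|\sum_{j\in F}\psi_j(x)\psi_j(x)^*\|\le K\|x\|^2$ and $\|\sum_{j\in F}\theta_j(y)^*\theta_j(y)\|\le K\|y\|^2$ for all $x,y\in\mathcal M$ and all finite $F\subseteq\Lambda$, and $\phi(x,y)=\sum_{j\in\Lambda}\psi_j(x)\theta_j(y)$ (weakly convergent) for all $x,y\in\mathcal M$. A bilinear map $\phi$ on $\mathcal M\times\mathcal M$ is completely positive if $\phi_n((x_{ij}),(x_{ij})^* )\ge0$ for all $(x_{ij})\in\mathbb M_n(\mathcal M)$, $n\in\mathbb N$, where $\phi_n((x_{ij}),(y_{ij}))=(\sum_{k=1}^n\phi(x_{ik},y_{kj}))$ and $(x_{ij})^*$ is the adjoint matrix. *)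

theory Defs
  imports "HOL-Analysis.Analysis"
begin

text \<open>Concrete Hilbert spaces: every complex Hilbert space is unitarily isomorphic to
  l2(I) for some index set I; we take I to be a type 'a.
  Bounded operators are maps on all functions that are linear and bounded on l2,
  preserve l2, and vanish off l2 (a normalisation giving unique representatives).\<close>

type_synonym 'a vec = "'a \<Rightarrow> complex"
type_synonym 'a op = "'a vec \<Rightarrow> 'a vec"

definition l2 :: "'a vec set" where
  "l2 = {\<xi>. (\<lambda>i. (cmod (\<xi> i))\<^sup>2) summable_on UNIV}"

definition cinner :: "'a vec \<Rightarrow> 'a vec \<Rightarrow> complex" where
  "cinner \<xi> \<eta> = (\<Sum>\<^sub>\<infinity>i. cnj (\<xi> i) * \<eta> i)"

definition l2norm :: "'a vec \<Rightarrow> real" where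
  "l2norm \<xi> = sqrt (\<Sum>\<^sub>\<infinity>i. (cmod (\<xi> i))\<^sup>2)"

definition bop :: "'a op set" where
  "bop = {T. T ` l2 \<subseteq> l2
      \<and> (\<forall>\<xi>\<in>l2. \<forall>\<eta>\<in>l2. \<forall>a. T (\<lambda>i. a * \<xi> i + \<eta> i) = (\<lambda>i. a * T \<xi> i + T \<eta> i))
      \<and> (\<exists>C. \<forall>\<xi>\<in>l2. l2norm (T \<xi>) \<le> C * l2norm \<xi>)
      \<and> (\<forall>\<xi>. \<xi> \<notin> l2 \<longrightarrow> T \<xi> = (\<lambda>i. 0))}"

definition opnorm :: "'a op \<Rightarrow> real" where
  "opnorm T = Sup {l2norm (T \<xi>) | \<xi>. \<xi> \<in> l2 \<and> l2norm \<xi> \<le> 1}"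

definition idop :: "'a op" where
  "idop = (\<lambda>\<xi>. if \<xi> \<in> l2 then \<xi> else (\<lambda>i. 0))"

definition op_add :: "'a op \<Rightarrow> 'a op \<Rightarrow> 'a op" where
  "op_add S T = (\<lambda>\<xi> i. S \<xi> i + T \<xi> i)"

definition op_scale :: "complex \<Rightarrow> 'a op \<Rightarrow> 'a op" where
  "op_scale c T = (\<lambda>\<xi> i. c * T \<xi> i)"

text \<open>Hilbert space adjoint (exists by the Riesz representation theorem).\<close>
definition adj :: "'a op \<Rightarrow> 'a op" where
  "adj T = (\<lambda>\<eta>. if \<eta> \<in> l2 then
      (THE \<zeta>. \<zeta> \<in> l2 \<and> (\<forall>\<xi>\<in>l2. cinner (T \<xi>) \<eta> = cinner \<xi> \<zeta>))
    else (\<lambda>i. 0))"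

definition commutant :: "'a op set \<Rightarrow> 'a op set" where
  "commutant S = {T \<in> bop. \<forall>A\<in>S. A \<circ> T = T \<circ> A}"

text \<open>von Neumann algebra: a self-adjoint set of bounded operators equal to its
  double commutant (von Neumann's bicommutant characterisation).\<close>
definition von_neumann_algebra :: "'a op set \<Rightarrow> bool" where
  "von_neumann_algebra M \<longleftrightarrow> M \<subseteq> bop \<and> (\<forall>T\<in>M. adj T \<in> M)
      \<and> commutant (commutant M) = M"

definition mats :: "nat \<Rightarrow> 'a op set \<Rightarrow> (nat \<Rightarrow> nat \<Rightarrow> 'a op) set" where
  "mats n M = {X. \<forall>i<n. \<forall>j<n. X i j \<in> M}"

definition mat_apply :: "nat \<Rightarrow> (nat \<Rightarrow> nat \<Rightarrow> 'a op) \<Rightarrow> (nat \<Rightarrow> 'a vec) \<Rightarrow> nat \<Rightarrow> 'a vec" where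
  "mat_apply n X \<xi> = (\<lambda>i k. \<Sum>j<n. X i j (\<xi> j) k)"

definition mnorm :: "nat \<Rightarrow> (nat \<Rightarrow> nat \<Rightarrow> 'a op) \<Rightarrow> real" where
  "mnorm n X = Sup {sqrt (\<Sum>i<n. (l2norm (mat_apply n X \<xi> i))\<^sup>2) | \<xi>.
      (\<forall>j<n. \<xi> j \<in> l2) \<and> (\<Sum>j<n. (l2norm (\<xi> j))\<^sup>2) \<le> 1}"

definition mpos :: "nat \<Rightarrow> (nat \<Rightarrow> nat \<Rightarrow> 'a op) \<Rightarrow> bool" where
  "mpos n X \<longleftrightarrow> (\<forall>\<xi>. (\<forall>j<n. \<xi> j \<in> l2) \<longrightarrow>
      (let q = (\<Sum>i<n. cinner (\<xi> i) (mat_apply n X \<xi> i)) in Im q = 0 \<and> Re q \<ge> 0))"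

definition madj :: "(nat \<Rightarrow> nat \<Rightarrow> 'a op) \<Rightarrow> nat \<Rightarrow> nat \<Rightarrow> 'a op" where
  "madj X = (\<lambda>i j. adj (X j i))"

definition bil_ampl :: "nat \<Rightarrow> ('a op \<Rightarrow> 'a op \<Rightarrow> 'b op)
    \<Rightarrow> (nat \<Rightarrow> nat \<Rightarrow> 'a op) \<Rightarrow> (nat \<Rightarrow> nat \<Rightarrow> 'a op) \<Rightarrow> nat \<Rightarrow> nat \<Rightarrow> 'b op" where
  "bil_ampl n \<phi> X Y = (\<lambda>i j \<xi> l. \<Sum>k<n. \<phi> (X i k) (Y k j) \<xi> l)"

definition lin_ampl :: "('a op \<Rightarrow> 'b op) \<Rightarrow> (nat \<Rightarrow> nat \<Rightarrow> 'a op) \<Rightarrow> nat \<Rightarrow> nat \<Rightarrow> 'b op" where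
  "lin_ampl \<psi> X = (\<lambda>i j. \<psi> (X i j))"

definition linear_map :: "'a op set \<Rightarrow> 'b op set \<Rightarrow> ('a op \<Rightarrow> 'b op) \<Rightarrow> bool" where
  "linear_map M N \<psi> \<longleftrightarrow> (\<forall>x\<in>M. \<psi> x \<in> N)
     \<and> (\<forall>x\<in>M. \<forall>y\<in>M. \<forall>a. \<psi> (op_add (op_scale a x) y) = op_add (op_scale a (\<psi> x)) (\<psi> y))"

definition cb_linear :: "'a op set \<Rightarrow> 'b op set \<Rightarrow> ('a op \<Rightarrow> 'b op) \<Rightarrow> bool" where
  "cb_linear M N \<psi> \<longleftrightarrow> linear_map M N \<psi>
     \<and> (\<exists>K. \<forall>n. \<forall>X\<in>mats n M. mnorm n (lin_ampl \<psi> X) \<le> K * mnorm n X)"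

definition bilinear_map :: "'a op set \<Rightarrow> 'b op set \<Rightarrow> ('a op \<Rightarrow> 'a op \<Rightarrow> 'b op) \<Rightarrow> bool" where
  "bilinear_map M N \<phi> \<longleftrightarrow> (\<forall>x\<in>M. \<forall>y\<in>M. \<phi> x y \<in> N)
     \<and> (\<forall>x\<in>M. \<forall>x'\<in>M. \<forall>y\<in>M. \<forall>a.
          \<phi> (op_add (op_scale a x) x') y = op_add (op_scale a (\<phi> x y)) (\<phi> x' y))
     \<and> (\<forall>x\<in>M. \<forall>y\<in>M. \<forall>y'\<in>M. \<forall>a.
          \<phi> x (op_add (op_scale a y) y') = op_add (op_scale a (\<phi> x y)) (\<phi> x y'))"

definition cb_bilinear :: "'a op set \<Rightarrow> 'b op set \<Rightarrow> ('a op \<Rightarrow> 'a op \<Rightarrow> 'b op) \<Rightarrow> bool" where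
  "cb_bilinear M N \<phi> \<longleftrightarrow> bilinear_map M N \<phi>
     \<and> (\<exists>K. \<forall>n. \<forall>X\<in>mats n M. \<forall>Y\<in>mats n M.
           mnorm n (bil_ampl n \<phi> X Y) \<le> K * mnorm n X * mnorm n Y)"

definition cont_bilinear :: "'a op set \<Rightarrow> 'b op set \<Rightarrow> ('a op \<Rightarrow> 'a op \<Rightarrow> 'b op) \<Rightarrow> bool" where
  "cont_bilinear M N \<phi> \<longleftrightarrow> bilinear_map M N \<phi>
     \<and> (\<exists>C. \<forall>x\<in>M. \<forall>y\<in>M. opnorm (\<phi> x y) \<le> C * opnorm x * opnorm y)"

definition cp_bilinear :: "'a op set \<Rightarrow> ('a op \<Rightarrow> 'a op \<Rightarrow> 'b op) \<Rightarrow> bool" where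
  "cp_bilinear M \<phi> \<longleftrightarrow> (\<forall>n. \<forall>X\<in>mats n M. mpos n (bil_ampl n \<phi> X (madj X)))"

text \<open>The series is required to
  converge in the weak operator topology, i.e. as a net of finite partial sums
  tested against vectors: this is unordered summation (has_sum).\<close>
definition type_B_factorization :: "'a op set \<Rightarrow> 'b op set \<Rightarrow> ('a op \<Rightarrow> 'a op \<Rightarrow> 'b op)
    \<Rightarrow> 'c set \<Rightarrow> ('c \<Rightarrow> 'a op \<Rightarrow> 'b op) \<Rightarrow> ('c \<Rightarrow> 'a op \<Rightarrow> 'b op) \<Rightarrow> real \<Rightarrow> bool" where
  "type_B_factorization M N \<phi> \<Lambda> \<psi> \<theta> K \<longleftrightarrow>
     (\<forall>j\<in>\<Lambda>. cb_linear M N (\<psi> j) \<and> cb_linear M N (\<theta> j))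
   \<and> (\<forall>x\<in>M. \<forall>F. finite F \<and> F \<subseteq> \<Lambda> \<longrightarrow>
        opnorm (\<lambda>\<xi> l. \<Sum>j\<in>F. (\<psi> j x \<circ> adj (\<psi> j x)) \<xi> l) \<le> K * (opnorm x)\<^sup>2)
   \<and> (\<forall>y\<in>M. \<forall>F. finite F \<and> F \<subseteq> \<Lambda> \<longrightarrow>
        opnorm (\<lambda>\<xi> l. \<Sum>j\<in>F. (adj (\<theta> j y) \<circ> \<theta> j y) \<xi> l) \<le> K * (opnorm y)\<^sup>2)
   \<and> (\<forall>x\<in>M. \<forall>y\<in>M. \<forall>\<xi>\<in>l2. \<forall>\<eta>\<in>l2.
        ((\<lambda>j. cinner \<eta> (\<psi> j x (\<theta> j y \<xi>))) has_sum cinner \<eta> (\<phi> x y \<xi>)) \<Lambda>)"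

end

theory Submission
  imports Defs
begin


definition sqn :: "'a vec \<Rightarrow> real" where
  "sqn \<xi> = (\<Sum>\<^sub>\<infinity>i. (cmod (\<xi> i))\<^sup>2)"

definition trunc :: "'a set \<Rightarrow> 'a vec \<Rightarrow> 'a vec" where
  "trunc L \<xi> = (\<lambda>i. if i \<in> L then \<xi> i else 0)"

definition tail :: "'a set \<Rightarrow> 'a vec \<Rightarrow> 'a vec" where
  "tail L \<xi> = (\<lambda>i. if i \<in> L then 0 else \<xi> i)"

definition ev :: "'a \<Rightarrow> 'a vec" where
  "ev l = (\<lambda>i. if i = l then 1 else 0)"

lemma l2_summ: "\<xi> \<in> l2 \<Longrightarrow> (\<lambda>i. (cmod (\<xi> i))\<^sup>2) summable_on UNIV"
  by (simp add: l2_def)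

lemma sqn_nonneg: "sqn \<xi> \<ge> 0"
  unfolding sqn_def by (rule infsum_nonneg) simp

lemma l2norm_sqn: "l2norm \<xi> = sqrt (sqn \<xi>)"
  by (simp add: l2norm_def sqn_def)

lemma l2norm_nonneg: "l2norm \<xi> \<ge> 0"
  by (simp add: l2norm_sqn sqn_nonneg)

lemma l2norm_sq: "(l2norm \<xi>)\<^sup>2 = sqn \<xi>"
  by (simp add: l2norm_sqn sqn_nonneg)

lemma l2_zero[simp]: "(\<lambda>i. 0) \<in> l2"
  by (simp add: l2_def)

lemma sq2: "((p::real) + q)\<^sup>2 \<le> 2 * p\<^sup>2 + 2 * q\<^sup>2"
proof -
  have "0 \<le> (p - q)\<^sup>2" by simp
  thus ?thesis by (simp add: power2_eq_square algebra_simps)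
qed

lemma sq2': "0 \<le> p \<Longrightarrow> 0 \<le> q \<Longrightarrow> (p::real) * q \<le> p\<^sup>2 + q\<^sup>2"
proof -
  assume "0 \<le> p" "0 \<le> q"
  have "0 \<le> (p - q)\<^sup>2" "0 \<le> p * q" using \<open>0 \<le> p\<close> \<open>0 \<le> q\<close> by simp_all
  thus ?thesis by (simp add: power2_eq_square algebra_simps)
qed

lemma l2_lin:
  assumes "\<xi> \<in> l2" "\<eta> \<in> l2"
  shows "(\<lambda>i. a * \<xi> i + b * \<eta> i) \<in> l2"
proof -
  have s: "(\<lambda>i. 2 * (cmod a)\<^sup>2 * (cmod (\<xi> i))\<^sup>2 + 2 * (cmod b)\<^sup>2 * (cmod (\<eta> i))\<^sup>2) summable_on UNIV"
    using assms by (intro summable_on_add summable_on_cmult_right) (auto simp: l2_def)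
  have "(cmod (a * \<xi> i + b * \<eta> i))\<^sup>2 \<le> 2 * (cmod a)\<^sup>2 * (cmod (\<xi> i))\<^sup>2 + 2 * (cmod b)\<^sup>2 * (cmod (\<eta> i))\<^sup>2" for i
  proof -
    have "cmod (a * \<xi> i + b * \<eta> i) \<le> cmod a * cmod (\<xi> i) + cmod b * cmod (\<eta> i)"
      by (metis norm_mult norm_triangle_ineq)
    hence "(cmod (a * \<xi> i + b * \<eta> i))\<^sup>2 \<le> (cmod a * cmod (\<xi> i) + cmod b * cmod (\<eta> i))\<^sup>2"
      by (simp add: power_mono)
    also have "\<dots> \<le> 2 * (cmod a)\<^sup>2 * (cmod (\<xi> i))\<^sup>2 + 2 * (cmod b)\<^sup>2 * (cmod (\<eta> i))\<^sup>2"
      using sq2[of "cmod a * cmod (\<xi> i)" "cmod b * cmod (\<eta> i)"] by (simp add: power_mult_distrib)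
    finally show ?thesis .
  qed
  then show ?thesis unfolding l2_def
    by (auto intro: summable_on_comparison_test[OF s])
qed

lemma l2_trunc: "finite L \<Longrightarrow> trunc L \<xi> \<in> l2"
  unfolding l2_def trunc_def mem_Collect_eq
  by (rule finite_nonzero_values_imp_summable_on) (auto elim: finite_subset[rotated])

lemma l2_tail: "\<xi> \<in> l2 \<Longrightarrow> tail L \<xi> \<in> l2"
  unfolding l2_def tail_def mem_Collect_eq
  by (rule summable_on_comparison_test[where f="\<lambda>i. (cmod (\<xi> i))\<^sup>2"]) auto

lemma l2_ev: "ev l \<in> l2"
proof -
  have "ev l = trunc {l} (\<lambda>_. 1)" by (auto simp: ev_def trunc_def)
  thus ?thesis using l2_trunc[of "{l}" "\<lambda>_. 1"] by simp
qed

lemma cinner_abs: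
  assumes "\<xi> \<in> l2" "\<eta> \<in> l2"
  shows "(\<lambda>i. norm (cnj (\<xi> i) * \<eta> i)) summable_on UNIV"
proof -
  have s: "(\<lambda>i. (cmod (\<xi> i))\<^sup>2 + (cmod (\<eta> i))\<^sup>2) summable_on UNIV"
    using assms by (intro summable_on_add) (auto simp: l2_def)
  have "norm (cnj (\<xi> i) * \<eta> i) \<le> (cmod (\<xi> i))\<^sup>2 + (cmod (\<eta> i))\<^sup>2" for i
    using sq2'[of "cmod (\<xi> i)" "cmod (\<eta> i)"] by (simp add: norm_mult)
  then show ?thesis
    by (auto intro: summable_on_comparison_test[OF s])
qed

lemma cinner_has_sum:
  assumes "\<xi> \<in> l2" "\<eta> \<in> l2"
  shows "((\<lambda>i. cnj (\<xi> i) * \<eta> i) has_sum cinner \<xi> \<eta>) UNIV"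
  using abs_summable_summable[OF cinner_abs[OF assms]] by (simp add: cinner_def)

lemma cinner_lin2:
  assumes "\<xi> \<in> l2" "\<eta> \<in> l2" "\<zeta> \<in> l2"
  shows "cinner \<xi> (\<lambda>i. a * \<eta> i + b * \<zeta> i) = a * cinner \<xi> \<eta> + b * cinner \<xi> \<zeta>"
proof -
  have "((\<lambda>i. a * (cnj (\<xi> i) * \<eta> i) + b * (cnj (\<xi> i) * \<zeta> i)) has_sum (a * cinner \<xi> \<eta> + b * cinner \<xi> \<zeta>)) UNIV"
    by (intro has_sum_add has_sum_cmult_right cinner_has_sum assms)
  then show ?thesis unfolding cinner_def
    by (intro infsumI) (simp add: algebra_simps)
qed

lemma cinner_cnj: "cinner \<eta> \<xi> = cnj (cinner \<xi> \<eta>)"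
  unfolding cinner_def by (simp flip: infsum_cnj add: mult.commute)

lemma cinner_lin1:
  assumes "\<xi> \<in> l2" "\<eta> \<in> l2" "\<zeta> \<in> l2"
  shows "cinner (\<lambda>i. a * \<eta> i + b * \<zeta> i) \<xi> = cnj a * cinner \<eta> \<xi> + cnj b * cinner \<zeta> \<xi>"
  by (subst (1 2 3) cinner_cnj) (simp add: cinner_lin2[OF assms])

lemma cns: "cnj z * z = complex_of_real ((cmod z)\<^sup>2)"
  using complex_norm_square[of z] by (simp add: mult.commute)

lemma cinner_self:
  assumes "\<xi> \<in> l2"
  shows "cinner \<xi> \<xi> = complex_of_real (sqn \<xi>)"
proof -
  have "((\<lambda>i. complex_of_real ((cmod (\<xi> i))\<^sup>2)) has_sum complex_of_real (sqn \<xi>)) UNIV"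
    using assms unfolding sqn_def l2_def by (intro has_sum_of_real) simp
  moreover have "complex_of_real ((cmod (\<xi> i))\<^sup>2) = cnj (\<xi> i) * \<xi> i" for i
    using complex_norm_square[of "\<xi> i"] by (simp add: mult.commute)
  ultimately show ?thesis unfolding cinner_def by (intro infsumI) simp
qed

lemma cinner_trunc:
  assumes "finite L"
  shows "cinner (trunc L \<eta>) v = (\<Sum>l\<in>L. cnj (\<eta> l) * v l)"
proof -
  have "cinner (trunc L \<eta>) v = (\<Sum>\<^sub>\<infinity>l\<in>L. cnj (\<eta> l) * v l)"
    unfolding cinner_def trunc_def by (rule infsum_cong_neutral) auto
  then show ?thesis using assms by simp
qed

lemma cinner_ev: "cinner (ev l) v = v l"
proof -
  have "ev l = trunc {l} (\<lambda>_. 1)" by (auto simp: ev_def trunc_def)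
  thus ?thesis by (simp add: cinner_trunc)
qed

lemma sqn_le: "\<xi> \<in> l2 \<Longrightarrow> finite F \<Longrightarrow> (\<Sum>i\<in>F. (cmod (\<xi> i))\<^sup>2) \<le> sqn \<xi>"
  unfolding sqn_def by (rule finite_sum_le_infsum) (auto simp: l2_def)

lemma cauchy_schwarz:
  assumes "\<xi> \<in> l2" "\<eta> \<in> l2"
  shows "cmod (cinner \<xi> \<eta>) \<le> l2norm \<xi> * l2norm \<eta>"
proof -
  have "cmod (cinner \<xi> \<eta>) \<le> (\<Sum>\<^sub>\<infinity>i. norm (cnj (\<xi> i) * \<eta> i))"
    unfolding cinner_def by (rule norm_infsum_bound[OF cinner_abs[OF assms]])
  also have "\<dots> \<le> l2norm \<xi> * l2norm \<eta>"
  proof (rule infsum_le_finite_sums[OF cinner_abs[OF assms]])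
    fix F :: "'a set" assume F: "finite F"
    have "(\<Sum>i\<in>F. norm (cnj (\<xi> i) * \<eta> i)) = (\<Sum>i\<in>F. \<bar>cmod (\<xi> i)\<bar> * \<bar>cmod (\<eta> i)\<bar>)"
      by (simp add: norm_mult)
    also have "\<dots> \<le> L2_set (\<lambda>i. cmod (\<xi> i)) F * L2_set (\<lambda>i. cmod (\<eta> i)) F"
      by (rule L2_set_mult_ineq)
    also have "\<dots> \<le> l2norm \<xi> * l2norm \<eta>"
      unfolding L2_set_def l2norm_sqn
      by (intro mult_mono real_sqrt_le_mono sqn_le assms F) (auto simp: sqn_nonneg sum_nonneg)
    finally show "(\<Sum>i\<in>F. norm (cnj (\<xi> i) * \<eta> i)) \<le> l2norm \<xi> * l2norm \<eta>" .
  qed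
  finally show ?thesis .
qed



lemma sqn_lin_le:
  assumes "\<xi> \<in> l2" "\<eta> \<in> l2"
  shows "sqn (\<lambda>i. a * \<xi> i + b * \<eta> i) \<le> 2 * (cmod a)\<^sup>2 * sqn \<xi> + 2 * (cmod b)\<^sup>2 * sqn \<eta>"
proof -
  have s: "((\<lambda>i. 2 * (cmod a)\<^sup>2 * (cmod (\<xi> i))\<^sup>2 + 2 * (cmod b)\<^sup>2 * (cmod (\<eta> i))\<^sup>2) has_sum
      (2 * (cmod a)\<^sup>2 * sqn \<xi> + 2 * (cmod b)\<^sup>2 * sqn \<eta>)) UNIV"
    using assms unfolding sqn_def by (intro has_sum_add has_sum_cmult_right) (auto simp: l2_def)
  have le: "(cmod (a * \<xi> i + b * \<eta> i))\<^sup>2 \<le> 2 * (cmod a)\<^sup>2 * (cmod (\<xi> i))\<^sup>2 + 2 * (cmod b)\<^sup>2 * (cmod (\<eta> i))\<^sup>2" for i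
  proof -
    have "cmod (a * \<xi> i + b * \<eta> i) \<le> cmod a * cmod (\<xi> i) + cmod b * cmod (\<eta> i)"
      by (metis norm_mult norm_triangle_ineq)
    hence "(cmod (a * \<xi> i + b * \<eta> i))\<^sup>2 \<le> (cmod a * cmod (\<xi> i) + cmod b * cmod (\<eta> i))\<^sup>2"
      by (simp add: power_mono)
    also have "\<dots> \<le> 2 * (cmod a)\<^sup>2 * (cmod (\<xi> i))\<^sup>2 + 2 * (cmod b)\<^sup>2 * (cmod (\<eta> i))\<^sup>2"
      using sq2[of "cmod a * cmod (\<xi> i)" "cmod b * cmod (\<eta> i)"] by (simp add: power_mult_distrib)
    finally show ?thesis .
  qed
  have "(\<lambda>i. a * \<xi> i + b * \<eta> i) \<in> l2" using l2_lin assms by blast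
  then have "sqn (\<lambda>i. a * \<xi> i + b * \<eta> i) \<le> (\<Sum>\<^sub>\<infinity>i. 2 * (cmod a)\<^sup>2 * (cmod (\<xi> i))\<^sup>2 + 2 * (cmod b)\<^sup>2 * (cmod (\<eta> i))\<^sup>2)"
    unfolding sqn_def using s le by (intro infsum_mono) (auto simp: l2_def summable_on_def)
  also have "\<dots> = 2 * (cmod a)\<^sup>2 * sqn \<xi> + 2 * (cmod b)\<^sup>2 * sqn \<eta>"
    by (rule infsumI[OF s])
  finally show ?thesis .
qed

lemma sqn_scale: "\<xi> \<in> l2 \<Longrightarrow> sqn (\<lambda>i. a * \<xi> i) = (cmod a)\<^sup>2 * sqn \<xi>"
  unfolding sqn_def by (simp add: norm_mult power_mult_distrib infsum_cmult_right l2_def)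

lemma l2norm_scale: "\<xi> \<in> l2 \<Longrightarrow> l2norm (\<lambda>i. a * \<xi> i) = cmod a * l2norm \<xi>"
  by (simp add: l2norm_sqn sqn_scale real_sqrt_mult)

lemma l2_scale: "\<xi> \<in> l2 \<Longrightarrow> (\<lambda>i. a * \<xi> i) \<in> l2"
  using l2_lin[of \<xi> "\<lambda>i. 0" a 0] by simp

lemma l2_add: "\<xi> \<in> l2 \<Longrightarrow> \<eta> \<in> l2 \<Longrightarrow> (\<lambda>i. \<xi> i + \<eta> i) \<in> l2"
  using l2_lin[of \<xi> \<eta> 1 1] by simp

lemma l2_diff: "\<xi> \<in> l2 \<Longrightarrow> \<eta> \<in> l2 \<Longrightarrow> (\<lambda>i. \<xi> i - \<eta> i) \<in> l2"
  using l2_lin[of \<xi> \<eta> 1 "-1"] by simp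

lemma l2_sum: "finite F \<Longrightarrow> (\<And>j. j \<in> F \<Longrightarrow> v j \<in> l2) \<Longrightarrow> (\<lambda>l. \<Sum>j\<in>F. v j l) \<in> l2"
  by (induction F rule: finite_induct) (auto intro: l2_add)

lemma cinner_sum:
  assumes "\<xi> \<in> l2" "finite F" "\<And>j. j \<in> F \<Longrightarrow> v j \<in> l2"
  shows "cinner \<xi> (\<lambda>l. \<Sum>j\<in>F. v j l) = (\<Sum>j\<in>F. cinner \<xi> (v j))"
  using assms(2,3)
proof (induction F rule: finite_induct)
  case empty
  then show ?case unfolding cinner_def by simp
next
  case (insert x F)
  have "cinner \<xi> (\<lambda>l. \<Sum>j\<in>insert x F. v j l) = cinner \<xi> (\<lambda>l. 1 * v x l + 1 * (\<Sum>j\<in>F. v j l))"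
    using insert by simp
  also have "\<dots> = cinner \<xi> (v x) + cinner \<xi> (\<lambda>l. \<Sum>j\<in>F. v j l)"
    using insert assms(1) by (subst cinner_lin2) (auto intro: l2_sum)
  finally show ?case using insert by simp
qed

lemma cinner_add1: "\<xi> \<in> l2 \<Longrightarrow> \<eta> \<in> l2 \<Longrightarrow> \<zeta> \<in> l2 \<Longrightarrow> cinner (\<lambda>i. \<eta> i + \<zeta> i) \<xi> = cinner \<eta> \<xi> + cinner \<zeta> \<xi>"
  using cinner_lin1[of \<xi> \<eta> \<zeta> 1 1] by simp

lemma cinner_add2: "\<xi> \<in> l2 \<Longrightarrow> \<eta> \<in> l2 \<Longrightarrow> \<zeta> \<in> l2 \<Longrightarrow> cinner \<xi> (\<lambda>i. \<eta> i + \<zeta> i) = cinner \<xi> \<eta> + cinner \<xi> \<zeta>"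
  using cinner_lin2[of \<xi> \<eta> \<zeta> 1 1] by simp

lemma cinner_zero1[simp]: "cinner (\<lambda>i. 0) v = 0"
  by (simp add: cinner_def)

lemma cinner_zero2[simp]: "cinner v (\<lambda>i. 0) = 0"
  by (simp add: cinner_def)

lemma sqn_zero_eq:
  assumes "\<xi> \<in> l2" "sqn \<xi> = 0"
  shows "\<xi> = (\<lambda>i. 0)"
proof
  fix i
  have "(\<Sum>j\<in>{i}. (cmod (\<xi> j))\<^sup>2) \<le> sqn \<xi>" by (rule sqn_le[OF assms(1)]) simp
  then show "\<xi> i = 0" using assms(2) by simp
qed

lemma sqn_trunc: "finite L \<Longrightarrow> sqn (trunc L \<xi>) = (\<Sum>i\<in>L. (cmod (\<xi> i))\<^sup>2)"
proof -
  assume "finite L"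
  have "sqn (trunc L \<xi>) = (\<Sum>\<^sub>\<infinity>i\<in>L. (cmod (\<xi> i))\<^sup>2)"
    unfolding sqn_def trunc_def by (rule infsum_cong_neutral) auto
  then show ?thesis using \<open>finite L\<close> by simp
qed

lemma sqn_tail:
  assumes "\<xi> \<in> l2" "finite L"
  shows "sqn (tail L \<xi>) = sqn \<xi> - (\<Sum>i\<in>L. (cmod (\<xi> i))\<^sup>2)"
proof -
  have "sqn \<xi> = sqn (trunc L \<xi>) + sqn (tail L \<xi>)"
  proof -
    have "(\<lambda>i. (cmod (\<xi> i))\<^sup>2) = (\<lambda>i. (cmod (trunc L \<xi> i))\<^sup>2 + (cmod (tail L \<xi> i))\<^sup>2)"
      by (auto simp: trunc_def tail_def)
    then show ?thesis unfolding sqn_def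
      using l2_trunc[OF assms(2)] l2_tail[OF assms(1)]
      by (simp add: infsum_add l2_def)
  qed
  then show ?thesis using sqn_trunc[OF assms(2)] by simp
qed

lemma tail_small:
  assumes "\<xi> \<in> l2" "\<epsilon> > 0"
  shows "\<exists>L. finite L \<and> l2norm (tail L \<xi>) < \<epsilon>"
proof -
  have hs: "((\<lambda>i. (cmod (\<xi> i))\<^sup>2) has_sum sqn \<xi>) UNIV"
    using assms unfolding sqn_def l2_def by simp
  obtain F where F: "finite F" "dist (\<Sum>i\<in>F. (cmod (\<xi> i))\<^sup>2) (sqn \<xi>) \<le> \<epsilon>\<^sup>2 / 2"
    using has_sum_finite_approximation[OF hs, of "\<epsilon>\<^sup>2 / 2"] assms by auto
  have "sqn (tail F \<xi>) \<le> \<epsilon>\<^sup>2 / 2"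
  proof -
    have "sqn \<xi> - (\<Sum>i\<in>F. (cmod (\<xi> i))\<^sup>2) \<le> dist (\<Sum>i\<in>F. (cmod (\<xi> i))\<^sup>2) (sqn \<xi>)"
      unfolding dist_real_def by (metis abs_ge_self abs_minus_commute)
    then show ?thesis using F sqn_tail[OF assms(1) F(1)] by linarith
  qed
  also have "\<dots> < \<epsilon>\<^sup>2" using assms by simp
  finally have "sqrt (sqn (tail F \<xi>)) < \<epsilon>"
    using assms(2) real_sqrt_less_iff by (metis abs_of_pos real_sqrt_abs real_sqrt_less_mono)
  then show ?thesis using F by (auto simp: l2norm_sqn)
qed

lemma density_zero:
  assumes "\<xi> \<in> l2" "C \<ge> 0"
    and "\<And>L. finite L \<Longrightarrow> cmod h \<le> C * l2norm (tail L \<xi>)"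
  shows "h = 0"
proof (rule ccontr)
  assume "h \<noteq> 0"
  then have hp: "cmod h > 0" by simp
  define \<epsilon> where "\<epsilon> = cmod h / (C + 1)"
  have ep: "\<epsilon> > 0" using hp assms(2) by (simp add: \<epsilon>_def)
  obtain L where L: "finite L" "l2norm (tail L \<xi>) < \<epsilon>" using tail_small[OF assms(1) ep] by blast
  have "cmod h \<le> C * l2norm (tail L \<xi>)" using assms(3) L by blast
  also have "\<dots> \<le> C * \<epsilon>" using L assms(2) by (simp add: mult_left_mono)
  also have "\<dots> < cmod h"
    using hp assms(2) by (simp add: \<epsilon>_def field_simps)
  finally show False by simp
qed

lemma trunc_tail: "(\<lambda>i. 1 * tail L \<xi> i + trunc L \<xi> i) = \<xi>"
  by (auto simp: trunc_def tail_def)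

lemma sqrt_trick:
  assumes "(s::real) \<ge> 0" "c \<ge> 0" "s \<le> c * sqrt s"
  shows "s \<le> c\<^sup>2"
proof (cases "s = 0")
  case True then show ?thesis by simp
next
  case False
  then have "sqrt s > 0" using assms by simp
  have e: "sqrt s * sqrt s = s" using assms(1) by simp
  have "sqrt s * sqrt s \<le> c * sqrt s" using e assms(3) by linarith
  then have "sqrt s \<le> c" using \<open>sqrt s > 0\<close> by (meson mult_le_cancel_right_pos)
  then have "(sqrt s)\<^sup>2 \<le> c\<^sup>2" using assms by (intro power_mono) auto
  then show ?thesis using assms by simp
qed

lemma bop_l2: "T \<in> bop \<Longrightarrow> \<xi> \<in> l2 \<Longrightarrow> T \<xi> \<in> l2"
  by (auto simp: bop_def)

lemma bop_lin: "T \<in> bop \<Longrightarrow> \<xi> \<in> l2 \<Longrightarrow> \<eta> \<in> l2 \<Longrightarrow> T (\<lambda>i. a * \<xi> i + \<eta> i) = (\<lambda>i. a * T \<xi> i + T \<eta> i)"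
  by (auto simp: bop_def)

lemma bop_off: "T \<in> bop \<Longrightarrow> \<xi> \<notin> l2 \<Longrightarrow> T \<xi> = (\<lambda>i. 0)"
  by (auto simp: bop_def)

lemma bop_zero: "T \<in> bop \<Longrightarrow> T (\<lambda>i. 0) = (\<lambda>i. 0)"
  using bop_lin[of T "\<lambda>i. 0" "\<lambda>i. 0" "-1"] by simp

lemma bop_lin2:
  assumes "T \<in> bop" "\<xi> \<in> l2" "\<eta> \<in> l2"
  shows "T (\<lambda>i. a * \<xi> i + b * \<eta> i) = (\<lambda>i. a * T \<xi> i + b * T \<eta> i)"
proof -
  have "T (\<lambda>i. a * \<xi> i + b * \<eta> i) = (\<lambda>i. a * T \<xi> i + T (\<lambda>i. b * \<eta> i) i)"
    using bop_lin[OF assms(1,2) l2_scale[OF assms(3)]] by simp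
  moreover have "T (\<lambda>i. b * \<eta> i) = (\<lambda>i. b * T \<eta> i)"
    using bop_lin[OF assms(1,3) l2_zero, of b] bop_zero[OF assms(1)] by simp
  ultimately show ?thesis by simp
qed

lemma bop_scale: "T \<in> bop \<Longrightarrow> \<xi> \<in> l2 \<Longrightarrow> T (\<lambda>i. a * \<xi> i) = (\<lambda>i. a * T \<xi> i)"
  using bop_lin2[of T \<xi> "\<lambda>i. 0" a 0] bop_zero by simp

lemma bop_add: "T \<in> bop \<Longrightarrow> \<xi> \<in> l2 \<Longrightarrow> \<eta> \<in> l2 \<Longrightarrow> T (\<lambda>i. \<xi> i + \<eta> i) = (\<lambda>i. T \<xi> i + T \<eta> i)"
  using bop_lin[of T \<xi> \<eta> 1] by simp

lemma bop_diff: "T \<in> bop \<Longrightarrow> \<xi> \<in> l2 \<Longrightarrow> \<eta> \<in> l2 \<Longrightarrow> T (\<lambda>i. \<xi> i - \<eta> i) = (\<lambda>i. T \<xi> i - T \<eta> i)"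
  using bop_lin2[of T \<xi> \<eta> 1 "-1"] by simp

lemma bop_bound: "T \<in> bop \<Longrightarrow> \<exists>C\<ge>0. \<forall>\<xi>\<in>l2. l2norm (T \<xi>) \<le> C * l2norm \<xi>"
proof -
  assume "T \<in> bop"
  then obtain C where C: "\<forall>\<xi>\<in>l2. l2norm (T \<xi>) \<le> C * l2norm \<xi>" by (auto simp: bop_def)
  have "\<forall>\<xi>\<in>l2. l2norm (T \<xi>) \<le> max C 0 * l2norm \<xi>"
    using C by (metis l2norm_nonneg max.cobounded1 mult_right_mono order_trans)
  then show ?thesis by (intro exI[of _ "max C 0"]) auto
qed

lemma opnorm_bdd: "(T :: 'a op) \<in> bop \<Longrightarrow> bdd_above {l2norm (T \<xi>) | \<xi>. \<xi> \<in> l2 \<and> l2norm \<xi> \<le> 1}"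
proof -
  assume "T \<in> bop"
  then obtain C where C: "C \<ge> 0" "\<forall>\<xi>\<in>l2. l2norm (T \<xi>) \<le> C * l2norm \<xi>" using bop_bound by blast
  show ?thesis
  proof (rule bdd_aboveI[of _ C], clarify)
    fix \<xi> :: "'a vec" assume "\<xi> \<in> l2" "l2norm \<xi> \<le> 1"
    then have "l2norm (T \<xi>) \<le> C * l2norm \<xi>" using C by auto
    also have "\<dots> \<le> C" using \<open>l2norm \<xi> \<le> 1\<close> C(1) by (simp add: mult_left_le)
    finally show "l2norm (T \<xi>) \<le> C" .
  qed
qed

lemma l2norm_zero[simp]: "l2norm (\<lambda>i. 0) = 0"
  by (simp add: l2norm_def)

lemma opnorm_nonneg: "T \<in> bop \<Longrightarrow> opnorm T \<ge> 0"
proof -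
  assume T: "T \<in> bop"
  have m: "l2norm (T (\<lambda>i. 0)) \<in> {l2norm (T \<xi>) | \<xi>. \<xi> \<in> l2 \<and> l2norm \<xi> \<le> 1}"
    by (rule CollectI, rule exI[of _ "\<lambda>i. 0"]) simp
  have "l2norm (T (\<lambda>i. 0)) \<le> opnorm T"
    unfolding opnorm_def by (rule cSup_upper[OF m opnorm_bdd[OF T]])
  then show ?thesis using bop_zero[OF T] by simp
qed

lemma opnorm_bound:
  assumes "T \<in> bop" "\<xi> \<in> l2"
  shows "l2norm (T \<xi>) \<le> opnorm T * l2norm \<xi>"
proof (cases "l2norm \<xi> = 0")
  case True
  then have "\<xi> = (\<lambda>i. 0)" using sqn_zero_eq[OF assms(2)] by (simp add: l2norm_sqn sqn_nonneg)
  then show ?thesis using bop_zero[OF assms(1)] by simp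
next
  case False
  then have np: "l2norm \<xi> > 0" using l2norm_nonneg[of \<xi>] by linarith
  define \<eta> where "\<eta> = (\<lambda>i. complex_of_real (1 / l2norm \<xi>) * \<xi> i)"
  have \<eta>: "\<eta> \<in> l2" unfolding \<eta>_def using l2_scale[OF assms(2)] .
  have n\<eta>: "l2norm \<eta> = 1" unfolding \<eta>_def by (subst l2norm_scale[OF assms(2)]) (use np in \<open>simp add: norm_divide\<close>)
  have "l2norm (T \<eta>) \<le> opnorm T"
    unfolding opnorm_def by (rule cSup_upper[OF _ opnorm_bdd[OF assms(1)]]) (use \<eta> n\<eta> in auto)
  moreover have "T \<eta> = (\<lambda>i. complex_of_real (1 / l2norm \<xi>) * T \<xi> i)"
    unfolding \<eta>_def by (rule bop_scale[OF assms])
  moreover have "l2norm (\<lambda>i. complex_of_real (1 / l2norm \<xi>) * T \<xi> i) = l2norm (T \<xi>) / l2norm \<xi>"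
    by (subst l2norm_scale[OF bop_l2[OF assms]]) (use np in \<open>simp add: norm_divide\<close>)
  ultimately have "l2norm (T \<xi>) / l2norm \<xi> \<le> opnorm T" by simp
  then show ?thesis using np by (simp add: field_simps)
qed

lemma opnorm_le:
  fixes T :: "'a op"
  assumes "B \<ge> 0" "\<And>\<xi>. \<xi> \<in> l2 \<Longrightarrow> l2norm (T \<xi>) \<le> B * l2norm \<xi>"
  shows "opnorm T \<le> B"
  unfolding opnorm_def
proof (rule cSup_least)
  have m: "l2norm (T (\<lambda>i. 0)) \<in> {l2norm (T \<xi>) | \<xi>. \<xi> \<in> l2 \<and> l2norm \<xi> \<le> 1}"
    by (rule CollectI, rule exI[of _ "\<lambda>i. 0"]) simp
  then show "{l2norm (T \<xi>) |\<xi>. \<xi> \<in> l2 \<and> l2norm \<xi> \<le> 1} \<noteq> {}" by blast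
next
  fix x assume "x \<in> {l2norm (T \<xi>) |\<xi>. \<xi> \<in> l2 \<and> l2norm \<xi> \<le> 1}"
  then obtain \<xi> where "\<xi> \<in> l2" "l2norm \<xi> \<le> 1" "x = l2norm (T \<xi>)" by auto
  then show "x \<le> B" using assms(2)[of \<xi>] assms(1)
    by (metis mult_left_le order_trans)
qed

lemma bopI:
  fixes T :: "'a op"
  assumes "\<And>\<xi>. \<xi> \<in> l2 \<Longrightarrow> T \<xi> \<in> l2"
    and "\<And>\<xi> \<eta> a. \<xi> \<in> l2 \<Longrightarrow> \<eta> \<in> l2 \<Longrightarrow> T (\<lambda>i. a * \<xi> i + \<eta> i) = (\<lambda>i. a * T \<xi> i + T \<eta> i)"
    and "\<And>\<xi>. \<xi> \<in> l2 \<Longrightarrow> l2norm (T \<xi>) \<le> C * l2norm \<xi>"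
    and "\<And>\<xi>. \<xi> \<notin> l2 \<Longrightarrow> T \<xi> = (\<lambda>i. 0)"
  shows "T \<in> bop"
  unfolding bop_def using assms by blast

lemma bop_comp:
  fixes S T :: "'a op"
  assumes S: "S \<in> bop" and T: "T \<in> bop"
  shows "S \<circ> T \<in> bop"
proof (rule bopI)
  show "\<And>\<xi>. \<xi> \<in> l2 \<Longrightarrow> (S \<circ> T) \<xi> \<in> l2" using S T by (simp add: bop_l2)
  show "\<And>\<xi> \<eta> a. \<xi> \<in> l2 \<Longrightarrow> \<eta> \<in> l2 \<Longrightarrow> (S \<circ> T) (\<lambda>i. a * \<xi> i + \<eta> i) = (\<lambda>i. a * (S \<circ> T) \<xi> i + (S \<circ> T) \<eta> i)"
    using S T by (simp add: bop_lin bop_l2)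
  show "\<And>\<xi>. \<xi> \<in> l2 \<Longrightarrow> l2norm ((S \<circ> T) \<xi>) \<le> (opnorm S * opnorm T) * l2norm \<xi>"
  proof -
    fix \<xi> :: "'a vec" assume x: "\<xi> \<in> l2"
    have "l2norm (S (T \<xi>)) \<le> opnorm S * l2norm (T \<xi>)" using opnorm_bound S T x bop_l2 by blast
    also have "\<dots> \<le> opnorm S * (opnorm T * l2norm \<xi>)"
      by (rule mult_left_mono[OF opnorm_bound[OF T x] opnorm_nonneg[OF S]])
    finally show "l2norm ((S \<circ> T) \<xi>) \<le> (opnorm S * opnorm T) * l2norm \<xi>" by simp
  qed
  show "\<And>\<xi>. \<xi> \<notin> l2 \<Longrightarrow> (S \<circ> T) \<xi> = (\<lambda>i. 0)" using S T by (simp add: bop_off bop_zero)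
qed

lemma bop_comb:
  fixes S T :: "'a op"
  assumes S: "S \<in> bop" and T: "T \<in> bop"
  shows "(\<lambda>\<xi> i. a * S \<xi> i + b * T \<xi> i) \<in> bop"
proof (rule bopI)
  show "\<And>\<xi>. \<xi> \<in> l2 \<Longrightarrow> (\<lambda>i. a * S \<xi> i + b * T \<xi> i) \<in> l2" using S T by (simp add: bop_l2 l2_lin)
  show "\<And>\<xi> \<eta> c. \<xi> \<in> l2 \<Longrightarrow> \<eta> \<in> l2 \<Longrightarrow> (\<lambda>i. a * S (\<lambda>i. c * \<xi> i + \<eta> i) i + b * T (\<lambda>i. c * \<xi> i + \<eta> i) i)
      = (\<lambda>i. c * (a * S \<xi> i + b * T \<xi> i) + (a * S \<eta> i + b * T \<eta> i))"
  proof -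
    fix \<xi> \<eta> :: "'a vec" and c assume x: "\<xi> \<in> l2" "\<eta> \<in> l2"
    have 1: "S (\<lambda>i. c * \<xi> i + \<eta> i) = (\<lambda>i. c * S \<xi> i + S \<eta> i)" by (rule bop_lin[OF S x])
    have 2: "T (\<lambda>i. c * \<xi> i + \<eta> i) = (\<lambda>i. c * T \<xi> i + T \<eta> i)" by (rule bop_lin[OF T x])
    show "(\<lambda>i. a * S (\<lambda>i. c * \<xi> i + \<eta> i) i + b * T (\<lambda>i. c * \<xi> i + \<eta> i) i)
      = (\<lambda>i. c * (a * S \<xi> i + b * T \<xi> i) + (a * S \<eta> i + b * T \<eta> i))"
      unfolding 1 2 by (simp add: algebra_simps)
  qed
  show "\<And>\<xi>. \<xi> \<notin> l2 \<Longrightarrow> (\<lambda>i. a * S \<xi> i + b * T \<xi> i) = (\<lambda>i. 0)" using S T by (simp add: bop_off)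
  show "\<And>\<xi>. \<xi> \<in> l2 \<Longrightarrow> l2norm (\<lambda>i. a * S \<xi> i + b * T \<xi> i) \<le> sqrt (2 * (cmod a)\<^sup>2 * (opnorm S)\<^sup>2 + 2 * (cmod b)\<^sup>2 * (opnorm T)\<^sup>2) * l2norm \<xi>"
  proof -
    fix \<xi> :: "'a vec" assume x: "\<xi> \<in> l2"
    have "sqn (\<lambda>i. a * S \<xi> i + b * T \<xi> i) \<le> 2 * (cmod a)\<^sup>2 * sqn (S \<xi>) + 2 * (cmod b)\<^sup>2 * sqn (T \<xi>)"
      using sqn_lin_le S T x bop_l2 by blast
    also have "\<dots> \<le> 2 * (cmod a)\<^sup>2 * (opnorm S * l2norm \<xi>)\<^sup>2 + 2 * (cmod b)\<^sup>2 * (opnorm T * l2norm \<xi>)\<^sup>2"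
      unfolding l2norm_sq[symmetric]
      by (intro add_mono mult_left_mono power_mono opnorm_bound S T x l2norm_nonneg) auto
    also have "\<dots> = (2 * (cmod a)\<^sup>2 * (opnorm S)\<^sup>2 + 2 * (cmod b)\<^sup>2 * (opnorm T)\<^sup>2) * (l2norm \<xi>)\<^sup>2"
      by (simp add: power_mult_distrib algebra_simps)
    finally have "sqrt (sqn (\<lambda>i. a * S \<xi> i + b * T \<xi> i)) \<le> sqrt (\<dots>)" by (rule real_sqrt_le_mono)
    then show "l2norm (\<lambda>i. a * S \<xi> i + b * T \<xi> i) \<le> sqrt (2 * (cmod a)\<^sup>2 * (opnorm S)\<^sup>2 + 2 * (cmod b)\<^sup>2 * (opnorm T)\<^sup>2) * l2norm \<xi>"
      by (simp add: l2norm_sqn real_sqrt_mult sqn_nonneg)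
  qed
qed

lemma bop_zero_op: "(\<lambda>\<xi> i. 0) \<in> bop"
  by (rule bopI[where C=0]) auto

lemma bop_sum: "finite F \<Longrightarrow> (\<And>j. j \<in> F \<Longrightarrow> f j \<in> bop) \<Longrightarrow> (\<lambda>\<xi> l. \<Sum>j\<in>F. f j \<xi> l) \<in> bop"
proof (induction F rule: finite_induct)
  case empty then show ?case by (simp add: bop_zero_op)
next
  case (insert x F)
  have "(\<lambda>\<xi> i. 1 * f x \<xi> i + 1 * (\<Sum>j\<in>F. f j \<xi> i)) \<in> bop"
    using insert by (intro bop_comb) auto
  then show ?case using insert by simp
qed



lemma vec_eq_from_inner:
  assumes "\<And>l. cinner (ev l) \<zeta>1 = cinner (ev l) \<zeta>2"
  shows "\<zeta>1 = \<zeta>2"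
  using assms by (auto simp: cinner_ev)

lemma trunc_insert:
  "a \<notin> L \<Longrightarrow> trunc (insert a L) \<xi> = (\<lambda>i. \<xi> a * ev a i + trunc L \<xi> i)"
  by (auto simp: trunc_def ev_def)

lemma trunc_empty: "trunc {} \<xi> = (\<lambda>i. 0)"
  by (simp add: trunc_def)

lemma riesz_trunc:
  fixes T :: "'a op"
  assumes T: "T \<in> bop" and \<eta>: "\<eta> \<in> l2" and L: "finite L"
  shows "cinner (T (trunc L \<xi>)) \<eta> = (\<Sum>i\<in>L. cnj (\<xi> i) * cinner (T (ev i)) \<eta>)"
  using L
proof (induction L rule: finite_induct)
  case empty
  then show ?case by (simp add: trunc_empty bop_zero[OF T])
next
  case (insert a L)
  have "T (trunc (insert a L) \<xi>) = (\<lambda>i. \<xi> a * T (ev a) i + T (trunc L \<xi>) i)"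
    unfolding trunc_insert[OF insert(2)] by (rule bop_lin[OF T l2_ev l2_trunc[OF insert(1)]])
  also have "\<dots> = (\<lambda>i. \<xi> a * T (ev a) i + 1 * T (trunc L \<xi>) i)" by simp
  finally have "cinner (T (trunc (insert a L) \<xi>)) \<eta> = cnj (\<xi> a) * cinner (T (ev a)) \<eta> + cinner (T (trunc L \<xi>)) \<eta>"
    using cinner_lin1[OF \<eta> bop_l2[OF T l2_ev] bop_l2[OF T l2_trunc[OF insert(1)]], where a="\<xi> a" and b=1] by simp
  then show ?case using insert by simp
qed

lemma riesz_exists:
  fixes T :: "'a op"
  assumes T: "T \<in> bop" and \<eta>: "\<eta> \<in> l2"
  shows "\<exists>\<zeta>\<in>l2. \<forall>\<xi>\<in>l2. cinner (T \<xi>) \<eta> = cinner \<xi> \<zeta>"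
proof -
  define \<zeta> where "\<zeta> = (\<lambda>i. cinner (T (ev i)) \<eta>)"
  define c where "c = opnorm T * l2norm \<eta>"
  have c0: "c \<ge> 0" unfolding c_def by (simp add: opnorm_nonneg[OF T] l2norm_nonneg)
  have bnd: "(\<Sum>i\<in>L. (cmod (\<zeta> i))\<^sup>2) \<le> c\<^sup>2" if L: "finite L" for L
  proof -
    define s where "s = (\<Sum>i\<in>L. (cmod (\<zeta> i))\<^sup>2)"
    have s0: "s \<ge> 0" unfolding s_def by (simp add: sum_nonneg)
    have "complex_of_real s = (\<Sum>i\<in>L. cnj (\<zeta> i) * \<zeta> i)"
      unfolding s_def by (simp add: cns)
    also have "\<dots> = cinner (T (trunc L \<zeta>)) \<eta>"
      using riesz_trunc[OF T \<eta> L] by (simp add: \<zeta>_def)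
    finally have es: "complex_of_real s = cinner (T (trunc L \<zeta>)) \<eta>" .
    have "s = cmod (cinner (T (trunc L \<zeta>)) \<eta>)" unfolding es[symmetric] using s0 by simp
    also have "\<dots> \<le> l2norm (T (trunc L \<zeta>)) * l2norm \<eta>"
      by (rule cauchy_schwarz[OF bop_l2[OF T l2_trunc[OF L]] \<eta>])
    also have "\<dots> \<le> opnorm T * l2norm (trunc L \<zeta>) * l2norm \<eta>"
      by (rule mult_right_mono[OF opnorm_bound[OF T l2_trunc[OF L]] l2norm_nonneg])
    also have "\<dots> = c * sqrt s"
      by (simp add: c_def s_def l2norm_sqn sqn_trunc[OF L])
    finally show ?thesis using sqrt_trick[OF s0 c0] s_def by simp
  qed
  have z: "\<zeta> \<in> l2"
    unfolding l2_def mem_Collect_eq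
    by (rule nonneg_bdd_above_summable_on) (use bnd in \<open>auto intro!: bdd_aboveI[of _ "c\<^sup>2"]\<close>)
  have "cinner (T \<xi>) \<eta> = cinner \<xi> \<zeta>" if x: "\<xi> \<in> l2" for \<xi>
  proof -
    define h where "h = cinner (T \<xi>) \<eta> - cinner \<xi> \<zeta>"
    have "h = 0"
    proof (rule density_zero[OF x])
      show "0 \<le> opnorm T * l2norm \<eta> + l2norm \<zeta>" by (simp add: opnorm_nonneg[OF T] l2norm_nonneg)
    next
      fix L :: "'a set" assume L: "finite L"
      have tl: "tail L \<xi> \<in> l2" by (rule l2_tail[OF x])
      have tr: "trunc L \<xi> \<in> l2" by (rule l2_trunc[OF L])
      have Tx: "T \<xi> = (\<lambda>i. 1 * T (tail L \<xi>) i + T (trunc L \<xi>) i)"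
        by (subst trunc_tail[of L \<xi>, symmetric]) (rule bop_lin[OF T tl tr])
      have "cinner (T \<xi>) \<eta> = cinner (T (tail L \<xi>)) \<eta> + cinner (T (trunc L \<xi>)) \<eta>"
        unfolding Tx by (simp add: cinner_add1 \<eta> bop_l2[OF T tl] bop_l2[OF T tr])
      moreover have "cinner \<xi> \<zeta> = cinner (tail L \<xi>) \<zeta> + cinner (trunc L \<xi>) \<zeta>"
        by (subst (1) trunc_tail[of L \<xi>, symmetric]) (simp add: cinner_add1 z tl tr)
      moreover have "cinner (T (trunc L \<xi>)) \<eta> = cinner (trunc L \<xi>) \<zeta>"
        by (simp add: riesz_trunc[OF T \<eta> L] cinner_trunc[OF L] \<zeta>_def)
      ultimately have h: "h = cinner (T (tail L \<xi>)) \<eta> - cinner (tail L \<xi>) \<zeta>"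
        unfolding h_def by simp
      have "cmod h \<le> cmod (cinner (T (tail L \<xi>)) \<eta>) + cmod (cinner (tail L \<xi>) \<zeta>)"
        unfolding h by (rule norm_triangle_ineq4)
      also have "\<dots> \<le> l2norm (T (tail L \<xi>)) * l2norm \<eta> + l2norm (tail L \<xi>) * l2norm \<zeta>"
        by (intro add_mono cauchy_schwarz bop_l2[OF T tl] \<eta> tl z)
      also have "\<dots> \<le> opnorm T * l2norm (tail L \<xi>) * l2norm \<eta> + l2norm (tail L \<xi>) * l2norm \<zeta>"
        by (intro add_mono mult_right_mono opnorm_bound[OF T tl] l2norm_nonneg) auto
      also have "\<dots> = (opnorm T * l2norm \<eta> + l2norm \<zeta>) * l2norm (tail L \<xi>)"
        by (simp add: algebra_simps)
      finally show "cmod h \<le> (opnorm T * l2norm \<eta> + l2norm \<zeta>) * l2norm (tail L \<xi>)" .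
    qed
    then show ?thesis unfolding h_def by simp
  qed
  then show ?thesis using z by blast
qed

lemma inner_unique:
  assumes "\<zeta>1 \<in> l2" "\<zeta>2 \<in> l2" "\<forall>\<xi>\<in>l2. cinner \<xi> \<zeta>1 = cinner \<xi> \<zeta>2"
  shows "\<zeta>1 = \<zeta>2"
proof
  fix l
  have "cinner (ev l) \<zeta>1 = cinner (ev l) \<zeta>2" by (rule bspec[OF assms(3) l2_ev])
  then show "\<zeta>1 l = \<zeta>2 l" by (simp add: cinner_ev)
qed

lemma adj_char:
  fixes T :: "'a op"
  assumes T: "T \<in> bop" and \<eta>: "\<eta> \<in> l2" and z: "\<zeta> \<in> l2"
    and h: "\<forall>\<xi>\<in>l2. cinner (T \<xi>) \<eta> = cinner \<xi> \<zeta>"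
  shows "adj T \<eta> = \<zeta>"
proof -
  have "(THE \<zeta>. \<zeta> \<in> l2 \<and> (\<forall>\<xi>\<in>l2. cinner (T \<xi>) \<eta> = cinner \<xi> \<zeta>)) = \<zeta>"
  proof (rule the_equality)
    show "\<zeta> \<in> l2 \<and> (\<forall>\<xi>\<in>l2. cinner (T \<xi>) \<eta> = cinner \<xi> \<zeta>)" using z h by blast
    fix \<zeta>' assume a: "\<zeta>' \<in> l2 \<and> (\<forall>\<xi>\<in>l2. cinner (T \<xi>) \<eta> = cinner \<xi> \<zeta>')"
    show "\<zeta>' = \<zeta>"
    proof (rule inner_unique)
      show "\<zeta>' \<in> l2" using a by (rule conjunct1)
      show "\<zeta> \<in> l2" by (rule z)
      show "\<forall>\<xi>\<in>l2. cinner \<xi> \<zeta>' = cinner \<xi> \<zeta>"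
      proof
        fix \<xi> :: "'a vec" assume x: "\<xi> \<in> l2"
        have "cinner \<xi> \<zeta>' = cinner (T \<xi>) \<eta>" using a x by simp
        also have "\<dots> = cinner \<xi> \<zeta>" using h x by simp
        finally show "cinner \<xi> \<zeta>' = cinner \<xi> \<zeta>" .
      qed
    qed
  qed
  then show ?thesis using \<eta> by (simp add: adj_def)
qed

lemma adj_prop:
  fixes T :: "'a op"
  assumes T: "T \<in> bop" and \<eta>: "\<eta> \<in> l2"
  shows "adj T \<eta> \<in> l2" and "\<And>\<xi>. \<xi> \<in> l2 \<Longrightarrow> cinner (T \<xi>) \<eta> = cinner \<xi> (adj T \<eta>)"
proof -
  obtain \<zeta> where z: "\<zeta> \<in> l2" "\<forall>\<xi>\<in>l2. cinner (T \<xi>) \<eta> = cinner \<xi> \<zeta>"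
    using riesz_exists[OF T \<eta>] by blast
  have "adj T \<eta> = \<zeta>" by (rule adj_char[OF T \<eta> z])
  then show "adj T \<eta> \<in> l2" "\<And>\<xi>. \<xi> \<in> l2 \<Longrightarrow> cinner (T \<xi>) \<eta> = cinner \<xi> (adj T \<eta>)" using z by auto
qed

lemma adj_l2: "T \<in> bop \<Longrightarrow> \<eta> \<in> l2 \<Longrightarrow> adj T \<eta> \<in> l2"
  using adj_prop(1) by blast

lemma adj_left: "T \<in> bop \<Longrightarrow> \<eta> \<in> l2 \<Longrightarrow> \<xi> \<in> l2 \<Longrightarrow> cinner (T \<xi>) \<eta> = cinner \<xi> (adj T \<eta>)"
  using adj_prop(2) by blast

lemma adj_right:
  assumes "T \<in> bop" "\<eta> \<in> l2" "\<xi> \<in> l2"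
  shows "cinner \<eta> (T \<xi>) = cinner (adj T \<eta>) \<xi>"
proof -
  have e: "cinner (T \<xi>) \<eta> = cinner \<xi> (adj T \<eta>)" by (rule adj_left[OF assms])
  have "cinner \<eta> (T \<xi>) = cnj (cinner (T \<xi>) \<eta>)" by (rule cinner_cnj)
  also have "\<dots> = cnj (cinner \<xi> (adj T \<eta>))" by (simp only: e)
  also have "\<dots> = cinner (adj T \<eta>) \<xi>" by (rule cinner_cnj[symmetric])
  finally show ?thesis .
qed

lemma adj_off: "\<eta> \<notin> l2 \<Longrightarrow> adj T \<eta> = (\<lambda>i. 0)"
  by (simp add: adj_def)

lemma adj_norm:
  fixes T :: "'a op"
  assumes T: "T \<in> bop" and \<eta>: "\<eta> \<in> l2"
  shows "l2norm (adj T \<eta>) \<le> opnorm T * l2norm \<eta>"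
proof -
  define s where "s = sqn (adj T \<eta>)"
  have a: "adj T \<eta> \<in> l2" by (rule adj_l2[OF T \<eta>])
  have s0: "s \<ge> 0" by (simp add: s_def sqn_nonneg)
  have c0: "opnorm T * l2norm \<eta> \<ge> 0" by (simp add: opnorm_nonneg[OF T] l2norm_nonneg)
  have "complex_of_real s = cinner (adj T \<eta>) (adj T \<eta>)" by (simp add: s_def cinner_self[OF a])
  also have "\<dots> = cinner (T (adj T \<eta>)) \<eta>" by (rule adj_left[OF T \<eta> a, symmetric])
  finally have es: "complex_of_real s = cinner (T (adj T \<eta>)) \<eta>" .
    have "s = cmod (cinner (T (adj T \<eta>)) \<eta>)" unfolding es[symmetric] using s0 by simp
  also have "\<dots> \<le> l2norm (T (adj T \<eta>)) * l2norm \<eta>" by (rule cauchy_schwarz[OF bop_l2[OF T a] \<eta>])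
  also have "\<dots> \<le> opnorm T * l2norm (adj T \<eta>) * l2norm \<eta>"
    by (rule mult_right_mono[OF opnorm_bound[OF T a] l2norm_nonneg])
  also have "\<dots> = (opnorm T * l2norm \<eta>) * sqrt s" by (simp add: s_def l2norm_sqn)
  finally have s2: "s \<le> (opnorm T * l2norm \<eta>)\<^sup>2" by (rule sqrt_trick[OF s0 c0])
  have "sqrt s \<le> opnorm T * l2norm \<eta>" using real_sqrt_le_mono[OF s2] c0 by simp
  then show ?thesis by (simp add: s_def l2norm_sqn)
qed

lemma adj_bop:
  fixes T :: "'a op"
  assumes T: "T \<in> bop"
  shows "adj T \<in> bop"
proof (rule bopI)
  show "\<And>\<xi>. \<xi> \<in> l2 \<Longrightarrow> adj T \<xi> \<in> l2" using adj_l2[OF T] .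
  show "\<And>\<xi>. \<xi> \<in> l2 \<Longrightarrow> l2norm (adj T \<xi>) \<le> opnorm T * l2norm \<xi>" using adj_norm[OF T] .
  show "\<And>\<xi>. \<xi> \<notin> l2 \<Longrightarrow> adj T \<xi> = (\<lambda>i. 0)" by (rule adj_off)
  fix \<xi> \<eta> :: "'a vec" and a assume x: "\<xi> \<in> l2" and y: "\<eta> \<in> l2"
  have c: "(\<lambda>i. a * \<xi> i + \<eta> i) \<in> l2" using l2_lin[OF x y, of a 1] by simp
  have c2: "(\<lambda>i. a * adj T \<xi> i + adj T \<eta> i) \<in> l2"
    using l2_lin[OF adj_l2[OF T x] adj_l2[OF T y], of a 1] by simp
  show "adj T (\<lambda>i. a * \<xi> i + \<eta> i) = (\<lambda>i. a * adj T \<xi> i + adj T \<eta> i)"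
  proof (rule adj_char[OF T c c2], intro ballI)
    fix \<zeta> :: "'a vec" assume z: "\<zeta> \<in> l2"
    have "cinner (T \<zeta>) (\<lambda>i. a * \<xi> i + \<eta> i) = a * cinner (T \<zeta>) \<xi> + cinner (T \<zeta>) \<eta>"
      using cinner_lin2[OF bop_l2[OF T z] x y, of a 1] by simp
    also have "\<dots> = a * cinner \<zeta> (adj T \<xi>) + cinner \<zeta> (adj T \<eta>)"
      by (simp add: adj_left[OF T x z] adj_left[OF T y z])
    also have "\<dots> = cinner \<zeta> (\<lambda>i. a * adj T \<xi> i + adj T \<eta> i)"
      using cinner_lin2[OF z adj_l2[OF T x] adj_l2[OF T y], of a 1] by simp
    finally show "cinner (T \<zeta>) (\<lambda>i. a * \<xi> i + \<eta> i) = cinner \<zeta> (\<lambda>i. a * adj T \<xi> i + adj T \<eta> i)" .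
  qed
qed

lemma adj_adj:
  fixes T :: "'a op"
  assumes T: "T \<in> bop"
  shows "adj (adj T) = T"
proof
  fix \<eta> :: "'a vec"
  show "adj (adj T) \<eta> = T \<eta>"
  proof (cases "\<eta> \<in> l2")
    case True
    show ?thesis
    proof (rule adj_char[OF adj_bop[OF T] True bop_l2[OF T True]], intro ballI)
      fix \<xi> :: "'a vec" assume x: "\<xi> \<in> l2"
      show "cinner (adj T \<xi>) \<eta> = cinner \<xi> (T \<eta>)"
        using adj_right[OF T x True] by simp
    qed
  next
    case False
    then show ?thesis by (simp add: adj_off bop_off[OF T])
  qed
qed

lemma opnorm_adj: "T \<in> bop \<Longrightarrow> opnorm (adj T) \<le> opnorm (T :: 'a op)"
  by (rule opnorm_le) (auto simp: opnorm_nonneg adj_norm)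

lemma adj_comb:
  fixes S T :: "'a op"
  assumes S: "S \<in> bop" and T: "T \<in> bop"
  shows "adj (\<lambda>\<xi> i. a * S \<xi> i + b * T \<xi> i) = (\<lambda>\<xi> i. cnj a * adj S \<xi> i + cnj b * adj T \<xi> i)"
proof
  fix \<eta> :: "'a vec"
  show "adj (\<lambda>\<xi> i. a * S \<xi> i + b * T \<xi> i) \<eta> = (\<lambda>i. cnj a * adj S \<eta> i + cnj b * adj T \<eta> i)"
  proof (cases "\<eta> \<in> l2")
    case True
    show ?thesis
    proof (rule adj_char[OF bop_comb[OF S T] True l2_lin[OF adj_l2[OF S True] adj_l2[OF T True]]], intro ballI)
      fix \<xi> :: "'a vec" assume x: "\<xi> \<in> l2"
      have "cinner (\<lambda>i. a * S \<xi> i + b * T \<xi> i) \<eta> = cnj a * cinner (S \<xi>) \<eta> + cnj b * cinner (T \<xi>) \<eta>"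
        by (rule cinner_lin1[OF True bop_l2[OF S x] bop_l2[OF T x]])
      also have "\<dots> = cnj a * cinner \<xi> (adj S \<eta>) + cnj b * cinner \<xi> (adj T \<eta>)"
        by (simp add: adj_left[OF S True x] adj_left[OF T True x])
      also have "\<dots> = cinner \<xi> (\<lambda>i. cnj a * adj S \<eta> i + cnj b * adj T \<eta> i)"
        by (rule cinner_lin2[OF x adj_l2[OF S True] adj_l2[OF T True], symmetric])
      finally show "cinner (\<lambda>i. a * S \<xi> i + b * T \<xi> i) \<eta> = cinner \<xi> (\<lambda>i. cnj a * adj S \<eta> i + cnj b * adj T \<eta> i)" .
    qed
  next
    case False
    then show ?thesis by (simp add: adj_off)
  qed
qed



lemma has_sum_diff:
  fixes f g :: "'c \<Rightarrow> complex"
  assumes "(f has_sum a) A" "(g has_sum b) A"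
  shows "((\<lambda>x. f x - g x) has_sum (a - b)) A"
proof -
  have "((\<lambda>x. - g x) has_sum (- b)) A" using assms(2) by (simp add: has_sum_uminus)
  from has_sum_add[OF assms(1) this] show ?thesis by simp
qed

lemma has_sum_finsum:
  fixes f :: "'l \<Rightarrow> 'c \<Rightarrow> complex"
  assumes "finite L" "\<And>l. l \<in> L \<Longrightarrow> (f l has_sum s l) A"
  shows "((\<lambda>x. \<Sum>l\<in>L. f l x) has_sum (\<Sum>l\<in>L. s l)) A"
  using assms
proof (induction L rule: finite_induct)
  case empty then show ?case by simp
next
  case (insert a L)
  then have "((\<lambda>x. f a x + (\<Sum>l\<in>L. f l x)) has_sum (s a + (\<Sum>l\<in>L. s l))) A"
    by (intro has_sum_add) auto
  then show ?case using insert by simp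
qed

lemma has_sum_congI: "(f has_sum s) A \<Longrightarrow> (\<And>x. x \<in> A \<Longrightarrow> f x = g x) \<Longrightarrow> (g has_sum s) A"
  using has_sum_cong[of A f g s] by blast

lemma tail_trunc_add: "(\<lambda>i. tail L \<xi> i + trunc L \<xi> i) = \<xi>"
  by (auto simp: trunc_def tail_def)

lemma weak_sum:
  fixes v :: "'c \<Rightarrow> 'a vec"
  assumes v: "\<And>j. j \<in> \<Lambda> \<Longrightarrow> v j \<in> l2" and B: "B \<ge> 0"
    and bnd: "\<And>\<eta> F. \<eta> \<in> l2 \<Longrightarrow> finite F \<Longrightarrow> F \<subseteq> \<Lambda> \<Longrightarrow> (\<Sum>j\<in>F. cmod (cinner \<eta> (v j))) \<le> B * l2norm \<eta>"
  shows "(\<lambda>l. \<Sum>\<^sub>\<infinity>j\<in>\<Lambda>. v j l) \<in> l2"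
    and "l2norm (\<lambda>l. \<Sum>\<^sub>\<infinity>j\<in>\<Lambda>. v j l) \<le> B"
    and "\<And>\<eta>. \<eta> \<in> l2 \<Longrightarrow> ((\<lambda>j. cinner \<eta> (v j)) has_sum cinner \<eta> (\<lambda>l. \<Sum>\<^sub>\<infinity>j\<in>\<Lambda>. v j l)) \<Lambda>"
proof -
  define w where "w = (\<lambda>l. \<Sum>\<^sub>\<infinity>j\<in>\<Lambda>. v j l)"
  define f where "f \<eta> = (\<Sum>\<^sub>\<infinity>j\<in>\<Lambda>. cinner \<eta> (v j))" for \<eta>
  have abs: "(\<lambda>j. norm (cinner \<eta> (v j))) summable_on \<Lambda>" if "\<eta> \<in> l2" for \<eta>
    by (rule nonneg_bdd_above_summable_on) (use bnd[OF that] in \<open>auto intro!: bdd_aboveI[of _ "B * l2norm \<eta>"]\<close>)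
  have fs: "((\<lambda>j. cinner \<eta> (v j)) has_sum f \<eta>) \<Lambda>" if "\<eta> \<in> l2" for \<eta>
    unfolding f_def using abs_summable_summable[OF abs[OF that]] by simp
  have fb: "cmod (f \<eta>) \<le> B * l2norm \<eta>" if e: "\<eta> \<in> l2" for \<eta>
  proof -
    have "cmod (f \<eta>) \<le> (\<Sum>\<^sub>\<infinity>j\<in>\<Lambda>. norm (cinner \<eta> (v j)))"
      unfolding f_def by (rule norm_infsum_bound[OF abs[OF e]])
    also have "\<dots> \<le> B * l2norm \<eta>"
      by (rule infsum_le_finite_sums[OF abs[OF e]]) (use bnd[OF e] in auto)
    finally show ?thesis .
  qed
  have coord: "((\<lambda>j. v j l) has_sum w l) \<Lambda>" for l
  proof -
    have "((\<lambda>j. v j l) has_sum f (ev l)) \<Lambda>" using fs[OF l2_ev] by (simp add: cinner_ev)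
    then show ?thesis unfolding w_def by (simp add: infsumI)
  qed
  have ftr: "((\<lambda>j. cinner (trunc L \<eta>) (v j)) has_sum (\<Sum>l\<in>L. cnj (\<eta> l) * w l)) \<Lambda>" if L: "finite L" for L \<eta>
  proof -
    have "((\<lambda>j. \<Sum>l\<in>L. cnj (\<eta> l) * v j l) has_sum (\<Sum>l\<in>L. cnj (\<eta> l) * w l)) \<Lambda>"
      by (rule has_sum_finsum[OF L]) (intro has_sum_cmult_right coord)
    then show ?thesis by (simp add: cinner_trunc[OF L])
  qed
  have ftr': "f (trunc L \<eta>) = cinner (trunc L \<eta>) w" if L: "finite L" for L \<eta>
    using has_sum_unique[OF fs[OF l2_trunc[OF L]] ftr[OF L]] by (simp add: cinner_trunc[OF L])
  have wb: "(\<Sum>l\<in>L. (cmod (w l))\<^sup>2) \<le> B\<^sup>2" if L: "finite L" for L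
  proof -
    define s where "s = (\<Sum>l\<in>L. (cmod (w l))\<^sup>2)"
    have s0: "s \<ge> 0" unfolding s_def by (simp add: sum_nonneg)
    have "complex_of_real s = (\<Sum>l\<in>L. cnj (w l) * w l)"
      unfolding s_def by (simp add: cns)
    also have "\<dots> = f (trunc L w)" by (simp add: ftr'[OF L] cinner_trunc[OF L])
    finally have es: "complex_of_real s = f (trunc L w)" .
    have "s = cmod (f (trunc L w))" unfolding es[symmetric] using s0 by simp
    also have "\<dots> \<le> B * l2norm (trunc L w)" by (rule fb[OF l2_trunc[OF L]])
    also have "\<dots> = B * sqrt s" by (simp add: s_def l2norm_sqn sqn_trunc[OF L])
    finally show ?thesis using sqrt_trick[OF s0 B] s_def by simp
  qed
  have wsum: "(\<lambda>l. (cmod (w l))\<^sup>2) summable_on UNIV"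
    by (rule nonneg_bdd_above_summable_on) (use wb in \<open>auto intro!: bdd_aboveI[of _ "B\<^sup>2"]\<close>)
  then have w: "w \<in> l2" by (simp add: l2_def)
  have "sqn w \<le> B\<^sup>2" unfolding sqn_def by (rule infsum_le_finite_sums[OF wsum]) (use wb in auto)
  then have wn: "l2norm w \<le> B" using B by (simp add: l2norm_sqn real_sqrt_le_iff real_le_lsqrt)
  have main: "((\<lambda>j. cinner \<eta> (v j)) has_sum cinner \<eta> w) \<Lambda>" if e: "\<eta> \<in> l2" for \<eta>
  proof -
    define h where "h = f \<eta> - cinner \<eta> w"
    have "h = 0"
    proof (rule density_zero[OF e])
      show "0 \<le> B + l2norm w" using B by (simp add: l2norm_nonneg)
    next
      fix L :: "'a set" assume L: "finite L"
      have tl: "tail L \<eta> \<in> l2" by (rule l2_tail[OF e])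
      have tr: "trunc L \<eta> \<in> l2" by (rule l2_trunc[OF L])
      have h1: "((\<lambda>j. cinner (tail L \<eta>) (v j) + cinner (trunc L \<eta>) (v j)) has_sum (f (tail L \<eta>) + f (trunc L \<eta>))) \<Lambda>"
        by (intro has_sum_add fs tl tr)
      have h2: "cinner (tail L \<eta>) (v j) + cinner (trunc L \<eta>) (v j) = cinner \<eta> (v j)" if "j \<in> \<Lambda>" for j
        using cinner_add1[OF v[OF that] tl tr] by (simp add: tail_trunc_add)
      have "((\<lambda>j. cinner \<eta> (v j)) has_sum (f (tail L \<eta>) + f (trunc L \<eta>))) \<Lambda>"
        by (rule has_sum_congI[OF h1 h2])
      then have "f \<eta> = f (tail L \<eta>) + f (trunc L \<eta>)" using has_sum_unique fs[OF e] by blast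
      moreover have "cinner \<eta> w = cinner (tail L \<eta>) w + cinner (trunc L \<eta>) w"
        using cinner_add1[OF w tl tr] by (simp add: tail_trunc_add)
      ultimately have h: "h = f (tail L \<eta>) - cinner (tail L \<eta>) w"
        unfolding h_def using ftr'[OF L] by simp
      have "cmod h \<le> cmod (f (tail L \<eta>)) + cmod (cinner (tail L \<eta>) w)"
        unfolding h by (rule norm_triangle_ineq4)
      also have "\<dots> \<le> B * l2norm (tail L \<eta>) + l2norm (tail L \<eta>) * l2norm w"
        by (intro add_mono fb tl cauchy_schwarz w)
      also have "\<dots> = (B + l2norm w) * l2norm (tail L \<eta>)" by (simp add: algebra_simps)
      finally show "cmod h \<le> (B + l2norm w) * l2norm (tail L \<eta>)" .
    qed
    then show ?thesis using fs[OF e] unfolding h_def by simp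
  qed
  show "(\<lambda>l. \<Sum>\<^sub>\<infinity>j\<in>\<Lambda>. v j l) \<in> l2" using w by (simp add: w_def)
  show "l2norm (\<lambda>l. \<Sum>\<^sub>\<infinity>j\<in>\<Lambda>. v j l) \<le> B" using wn by (simp add: w_def)
  show "\<And>\<eta>. \<eta> \<in> l2 \<Longrightarrow> ((\<lambda>j. cinner \<eta> (v j)) has_sum cinner \<eta> (\<lambda>l. \<Sum>\<^sub>\<infinity>j\<in>\<Lambda>. v j l)) \<Lambda>"
    using main by (simp add: w_def)
qed



definition Lop :: "('c \<Rightarrow> 'a op \<Rightarrow> 'b op) \<Rightarrow> ('c \<Rightarrow> 'a op \<Rightarrow> 'b op) \<Rightarrow> complex \<Rightarrow> 'c \<Rightarrow> 'a op \<Rightarrow> 'b op" where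
  "Lop \<psi> \<theta> c j x = (\<lambda>v l. (1/2) * \<psi> j x v l + (c/2) * adj (\<theta> j (adj x)) v l)"

definition Rop :: "('c \<Rightarrow> 'a op \<Rightarrow> 'b op) \<Rightarrow> ('c \<Rightarrow> 'a op \<Rightarrow> 'b op) \<Rightarrow> complex \<Rightarrow> 'c \<Rightarrow> 'a op \<Rightarrow> 'b op" where
  "Rop \<psi> \<theta> c j y = (\<lambda>v l. (1/2) * adj (\<psi> j (adj y)) v l + (cnj c/2) * \<theta> j y v l)"

definition gmap :: "'c set \<Rightarrow> ('c \<Rightarrow> 'a op \<Rightarrow> 'b op) \<Rightarrow> ('c \<Rightarrow> 'a op \<Rightarrow> 'b op) \<Rightarrow> complex \<Rightarrow> 'a op \<Rightarrow> 'a op \<Rightarrow> 'b op" where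
  "gmap \<Lambda> \<psi> \<theta> c x y = (\<lambda>\<xi>. if \<xi> \<in> l2 then (\<lambda>l. \<Sum>\<^sub>\<infinity>j\<in>\<Lambda>. Lop \<psi> \<theta> c j x (Rop \<psi> \<theta> c j y \<xi>) l) else (\<lambda>l. 0))"

lemma commutant_bop: "commutant S \<subseteq> bop"
  by (auto simp: commutant_def)

lemma commutant_comb:
  fixes A B :: "'a op"
  assumes S: "S \<subseteq> bop" and A: "A \<in> commutant S" and B: "B \<in> commutant S"
  shows "(\<lambda>\<xi> i. a * A \<xi> i + b * B \<xi> i) \<in> commutant S"
proof -
  have Ab: "A \<in> bop" and Bb: "B \<in> bop" using A B by (auto simp: commutant_def)
  have "C \<circ> (\<lambda>\<xi> i. a * A \<xi> i + b * B \<xi> i) = (\<lambda>\<xi> i. a * A \<xi> i + b * B \<xi> i) \<circ> C" if C: "C \<in> S" for C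
  proof
    fix \<xi> :: "'a vec"
    have Cb: "C \<in> bop" using C S by auto
    have CA0: "C \<circ> A = A \<circ> C" and CB0: "C \<circ> B = B \<circ> C" using A B C by (auto simp: commutant_def)
    have CA: "C (A \<zeta>) = A (C \<zeta>)" for \<zeta> using fun_cong[OF CA0, of \<zeta>] by simp
    have CB: "C (B \<zeta>) = B (C \<zeta>)" for \<zeta> using fun_cong[OF CB0, of \<zeta>] by simp
    show "(C \<circ> (\<lambda>\<xi> i. a * A \<xi> i + b * B \<xi> i)) \<xi> = ((\<lambda>\<xi> i. a * A \<xi> i + b * B \<xi> i) \<circ> C) \<xi>"
    proof (cases "\<xi> \<in> l2")
      case True
      then show ?thesis using bop_lin2[OF Cb bop_l2[OF Ab True] bop_l2[OF Bb True]] CA CB by simp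
    next
      case False
      then show ?thesis using bop_off[OF Ab False] bop_off[OF Bb False] bop_off[OF Cb False]
          bop_zero[OF Ab] bop_zero[OF Bb] bop_zero[OF Cb] by simp
    qed
  qed
  then show ?thesis unfolding commutant_def using bop_comb[OF Ab Bb] by auto
qed

lemma vn_bop: "von_neumann_algebra N \<Longrightarrow> T \<in> N \<Longrightarrow> T \<in> bop"
  by (auto simp: von_neumann_algebra_def)

lemma vn_adj: "von_neumann_algebra N \<Longrightarrow> T \<in> N \<Longrightarrow> adj T \<in> N"
  by (auto simp: von_neumann_algebra_def)

lemma vn_comb:
  assumes "von_neumann_algebra N" "A \<in> N" "B \<in> N"
  shows "(\<lambda>\<xi> i. a * A \<xi> i + b * B \<xi> i) \<in> N"
proof -
  have e: "commutant (commutant N) = N" using assms(1) by (simp add: von_neumann_algebra_def)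
  have A': "A \<in> commutant (commutant N)" using assms(2) e by simp
  have B': "B \<in> commutant (commutant N)" using assms(3) e by simp
  have "(\<lambda>\<xi> i. a * A \<xi> i + b * B \<xi> i) \<in> commutant (commutant N)"
    by (rule commutant_comb[OF commutant_bop A' B'])
  then show ?thesis using e by simp
qed

lemma vn_commute:
  assumes "von_neumann_algebra N" "A \<in> N" "T \<in> commutant N"
  shows "A (T \<xi>) = T (A \<xi>)"
proof -
  have "A \<circ> T = T \<circ> A" using assms unfolding commutant_def by auto
  from fun_cong[OF this, of \<xi>] show ?thesis by simp
qed

lemma adj_comb1:
  fixes S T :: "'a op"
  assumes S: "S \<in> bop" and T: "T \<in> bop"
  shows "adj (\<lambda>\<xi> i. a * S \<xi> i + T \<xi> i) = (\<lambda>\<xi> i. cnj a * adj S \<xi> i + adj T \<xi> i)"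
  using adj_comb[OF S T, of a 1] by simp

lemma abs_l2norm[simp]: "\<bar>l2norm \<xi>\<bar> = l2norm \<xi>"
  by (rule abs_of_nonneg[OF l2norm_nonneg])

lemma cinner_sum1:
  assumes "\<eta> \<in> l2" "finite F" "\<And>j. j \<in> F \<Longrightarrow> v j \<in> l2"
  shows "cinner (\<lambda>l. \<Sum>j\<in>F. v j l) \<eta> = (\<Sum>j\<in>F. cinner (v j) \<eta>)"
proof -
  have "cinner (\<lambda>l. \<Sum>j\<in>F. v j l) \<eta> = cnj (cinner \<eta> (\<lambda>l. \<Sum>j\<in>F. v j l))" by (rule cinner_cnj)
  also have "\<dots> = cnj (\<Sum>j\<in>F. cinner \<eta> (v j))" by (simp only: cinner_sum[OF assms])
  also have "\<dots> = (\<Sum>j\<in>F. cinner (v j) \<eta>)" by (simp add: cinner_cnj[of \<eta>])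
  finally show ?thesis .
qed

lemma comb4:
  fixes P1 P2 P3 P4 :: complex
  defines "E \<equiv> \<lambda>c. (1/4) * P1 + (cnj c/4) * P2 + (c/4) * P3 + (c * cnj c/4) * P4"
  shows "E 1 - E (-1) + \<i> * (E \<i> - E (-\<i>)) = P2"
  unfolding E_def by (simp add: algebra_simps)

lemma sqrt_prod: "K \<ge> 0 \<Longrightarrow> r \<ge> 0 \<Longrightarrow> s \<ge> 0 \<Longrightarrow> sqrt (K * r\<^sup>2 * s\<^sup>2) = sqrt K * r * s"
  by (simp add: real_sqrt_mult)

context
  fixes M :: "'a op set" and N :: "'b op set" and \<Lambda> :: "'c set"
    and \<psi> \<theta> :: "'c \<Rightarrow> 'a op \<Rightarrow> 'b op" and K :: real
  assumes vnM: "von_neumann_algebra M" and vnN: "von_neumann_algebra N"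
    and lin\<psi>: "\<And>j. j \<in> \<Lambda> \<Longrightarrow> linear_map M N (\<psi> j)"
    and lin\<theta>: "\<And>j. j \<in> \<Lambda> \<Longrightarrow> linear_map M N (\<theta> j)"
    and b\<psi>: "\<And>x F. x \<in> M \<Longrightarrow> finite F \<Longrightarrow> F \<subseteq> \<Lambda> \<Longrightarrow>
              opnorm (\<lambda>\<xi> l. \<Sum>j\<in>F. (\<psi> j x \<circ> adj (\<psi> j x)) \<xi> l) \<le> K * (opnorm x)\<^sup>2"
    and b\<theta>: "\<And>y F. y \<in> M \<Longrightarrow> finite F \<Longrightarrow> F \<subseteq> \<Lambda> \<Longrightarrow>
              opnorm (\<lambda>\<xi> l. \<Sum>j\<in>F. (adj (\<theta> j y) \<circ> \<theta> j y) \<xi> l) \<le> K * (opnorm y)\<^sup>2"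
begin

definition "Kp = max K 0"

lemma Kp0: "Kp \<ge> 0" by (simp add: Kp_def)

lemma M_bop: "x \<in> M \<Longrightarrow> x \<in> bop" using vn_bop[OF vnM] .
lemma N_bop: "x \<in> N \<Longrightarrow> x \<in> bop" using vn_bop[OF vnN] .
lemma M_adj: "x \<in> M \<Longrightarrow> adj x \<in> M" using vn_adj[OF vnM] .
lemma N_adj: "x \<in> N \<Longrightarrow> adj x \<in> N" using vn_adj[OF vnN] .

lemma \<psi>N: "j \<in> \<Lambda> \<Longrightarrow> x \<in> M \<Longrightarrow> \<psi> j x \<in> N"
  using lin\<psi> by (auto simp: linear_map_def)
lemma \<theta>N: "j \<in> \<Lambda> \<Longrightarrow> x \<in> M \<Longrightarrow> \<theta> j x \<in> N"
  using lin\<theta> by (auto simp: linear_map_def)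

lemma \<psi>lin: "j \<in> \<Lambda> \<Longrightarrow> x \<in> M \<Longrightarrow> x' \<in> M \<Longrightarrow>
   \<psi> j (\<lambda>\<xi> i. a * x \<xi> i + x' \<xi> i) = (\<lambda>\<xi> i. a * \<psi> j x \<xi> i + \<psi> j x' \<xi> i)"
  using lin\<psi> by (auto simp: linear_map_def op_add_def op_scale_def)
lemma \<theta>lin: "j \<in> \<Lambda> \<Longrightarrow> x \<in> M \<Longrightarrow> x' \<in> M \<Longrightarrow>
   \<theta> j (\<lambda>\<xi> i. a * x \<xi> i + x' \<xi> i) = (\<lambda>\<xi> i. a * \<theta> j x \<xi> i + \<theta> j x' \<xi> i)"
  using lin\<theta> by (auto simp: linear_map_def op_add_def op_scale_def)

lemma LopN: "j \<in> \<Lambda> \<Longrightarrow> x \<in> M \<Longrightarrow> Lop \<psi> \<theta> c j x \<in> N"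
  unfolding Lop_def by (intro vn_comb[OF vnN] \<psi>N N_adj \<theta>N M_adj)

lemma RopN: "j \<in> \<Lambda> \<Longrightarrow> x \<in> M \<Longrightarrow> Rop \<psi> \<theta> c j x \<in> N"
  unfolding Rop_def by (intro vn_comb[OF vnN] \<psi>N N_adj \<theta>N M_adj)

lemma Lop_bop: "j \<in> \<Lambda> \<Longrightarrow> x \<in> M \<Longrightarrow> Lop \<psi> \<theta> c j x \<in> bop"
  using LopN N_bop by blast
lemma Rop_bop: "j \<in> \<Lambda> \<Longrightarrow> x \<in> M \<Longrightarrow> Rop \<psi> \<theta> c j x \<in> bop"
  using RopN N_bop by blast

lemma Lop_adj:
  assumes j: "j \<in> \<Lambda>" and x: "x \<in> M" and \<eta>: "\<eta> \<in> l2" and v: "v \<in> l2"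
  shows "cinner \<eta> (Lop \<psi> \<theta> c j x v) = cinner (Rop \<psi> \<theta> c j (adj x) \<eta>) v"
proof -
  have P: "\<psi> j x \<in> bop" using \<psi>N[OF j x] N_bop by blast
  have Q: "\<theta> j (adj x) \<in> bop" using \<theta>N[OF j M_adj[OF x]] N_bop by blast
  have QA: "adj (\<theta> j (adj x)) \<in> bop" using adj_bop[OF Q] .
  have xx: "adj (adj x) = x" using adj_adj[OF M_bop[OF x]] .
  have "cinner \<eta> (Lop \<psi> \<theta> c j x v) = (1/2) * cinner \<eta> (\<psi> j x v) + (c/2) * cinner \<eta> (adj (\<theta> j (adj x)) v)"
    unfolding Lop_def by (rule cinner_lin2[OF \<eta> bop_l2[OF P v] bop_l2[OF QA v]])
  also have "\<dots> = (1/2) * cinner (adj (\<psi> j x) \<eta>) v + (c/2) * cinner (\<theta> j (adj x) \<eta>) v"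
    by (simp add: adj_right[OF P \<eta> v] adj_right[OF QA \<eta> v] adj_adj[OF Q])
  also have "\<dots> = cinner (Rop \<psi> \<theta> c j (adj x) \<eta>) v"
    unfolding Rop_def xx
    by (subst cinner_lin1[OF v adj_l2[OF P \<eta>] bop_l2[OF Q \<eta>]]) simp
  finally show ?thesis .
qed

lemma sum_sqn_psi:
  assumes z: "z \<in> M" and \<eta>: "\<eta> \<in> l2" and F: "finite F" "F \<subseteq> \<Lambda>"
  shows "(\<Sum>j\<in>F. sqn (adj (\<psi> j z) \<eta>)) \<le> Kp * (opnorm z)\<^sup>2 * (l2norm \<eta>)\<^sup>2"
proof -
  have P: "\<psi> j z \<in> bop" if "j \<in> F" for j using \<psi>N[OF _ z] N_bop F that by blast
  define Q where "Q = (\<lambda>\<xi> l. \<Sum>j\<in>F. (\<psi> j z \<circ> adj (\<psi> j z)) \<xi> l)"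
  have Qb: "Q \<in> bop" unfolding Q_def using P by (intro bop_sum F bop_comp adj_bop) auto
  have "complex_of_real (\<Sum>j\<in>F. sqn (adj (\<psi> j z) \<eta>)) = (\<Sum>j\<in>F. cinner (adj (\<psi> j z) \<eta>) (adj (\<psi> j z) \<eta>))"
    by (simp add: cinner_self adj_l2 P \<eta>)
  also have "\<dots> = (\<Sum>j\<in>F. cinner \<eta> (\<psi> j z (adj (\<psi> j z) \<eta>)))"
    by (intro sum.cong refl) (simp add: adj_right[OF P \<eta> adj_l2[OF P \<eta>]])
  also have "\<dots> = cinner \<eta> (Q \<eta>)"
    unfolding Q_def comp_def using P \<eta> by (subst cinner_sum[OF \<eta> F(1)]) (auto intro: bop_l2 adj_l2)
  finally have e: "complex_of_real (\<Sum>j\<in>F. sqn (adj (\<psi> j z) \<eta>)) = cinner \<eta> (Q \<eta>)" .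
  have "(\<Sum>j\<in>F. sqn (adj (\<psi> j z) \<eta>)) = cmod (complex_of_real (\<Sum>j\<in>F. sqn (adj (\<psi> j z) \<eta>)))"
  proof -
    have "0 \<le> (\<Sum>j\<in>F. sqn (adj (\<psi> j z) \<eta>))" by (intro sum_nonneg sqn_nonneg)
    then show ?thesis by (simp only: norm_of_real abs_of_nonneg)
  qed
  also have "\<dots> = cmod (cinner \<eta> (Q \<eta>))" by (simp only: e)
  also have "\<dots> \<le> l2norm \<eta> * l2norm (Q \<eta>)" by (rule cauchy_schwarz[OF \<eta> bop_l2[OF Qb \<eta>]])
  also have "\<dots> \<le> l2norm \<eta> * (opnorm Q * l2norm \<eta>)"
    by (rule mult_left_mono[OF opnorm_bound[OF Qb \<eta>] l2norm_nonneg])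
  also have "\<dots> \<le> l2norm \<eta> * (Kp * (opnorm z)\<^sup>2 * l2norm \<eta>)"
  proof -
    have "opnorm Q \<le> Kp * (opnorm z)\<^sup>2" unfolding Q_def Kp_def
      by (rule order_trans[OF b\<psi>[OF z F]]) (simp add: mult_right_mono)
    then show ?thesis by (intro mult_left_mono mult_right_mono l2norm_nonneg)
  qed
  also have "\<dots> = Kp * (opnorm z)\<^sup>2 * (l2norm \<eta>)\<^sup>2" by (simp add: power2_eq_square)
  finally show ?thesis .
qed

lemma sum_sqn_theta:
  assumes z: "z \<in> M" and \<eta>: "\<eta> \<in> l2" and F: "finite F" "F \<subseteq> \<Lambda>"
  shows "(\<Sum>j\<in>F. sqn (\<theta> j z \<eta>)) \<le> Kp * (opnorm z)\<^sup>2 * (l2norm \<eta>)\<^sup>2"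
proof -
  have P: "\<theta> j z \<in> bop" if "j \<in> F" for j using \<theta>N[OF _ z] N_bop F that by blast
  define Q where "Q = (\<lambda>\<xi> l. \<Sum>j\<in>F. (adj (\<theta> j z) \<circ> \<theta> j z) \<xi> l)"
  have Qb: "Q \<in> bop" unfolding Q_def using P by (intro bop_sum F bop_comp adj_bop) auto
  have "complex_of_real (\<Sum>j\<in>F. sqn (\<theta> j z \<eta>)) = (\<Sum>j\<in>F. cinner (\<theta> j z \<eta>) (\<theta> j z \<eta>))"
    by (simp add: cinner_self bop_l2 P \<eta>)
  also have "\<dots> = (\<Sum>j\<in>F. cinner \<eta> (adj (\<theta> j z) (\<theta> j z \<eta>)))"
    by (intro sum.cong refl) (simp add: adj_left[OF P bop_l2[OF P \<eta>] \<eta>])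
  also have "\<dots> = cinner \<eta> (Q \<eta>)"
    unfolding Q_def comp_def using P \<eta> by (subst cinner_sum[OF \<eta> F(1)]) (auto intro: bop_l2 adj_l2)
  finally have e: "complex_of_real (\<Sum>j\<in>F. sqn (\<theta> j z \<eta>)) = cinner \<eta> (Q \<eta>)" .
  have "(\<Sum>j\<in>F. sqn (\<theta> j z \<eta>)) = cmod (complex_of_real (\<Sum>j\<in>F. sqn (\<theta> j z \<eta>)))"
  proof -
    have "0 \<le> (\<Sum>j\<in>F. sqn (\<theta> j z \<eta>))" by (intro sum_nonneg sqn_nonneg)
    then show ?thesis by (simp only: norm_of_real abs_of_nonneg)
  qed
  also have "\<dots> = cmod (cinner \<eta> (Q \<eta>))" by (simp only: e)
  also have "\<dots> \<le> l2norm \<eta> * l2norm (Q \<eta>)" by (rule cauchy_schwarz[OF \<eta> bop_l2[OF Qb \<eta>]])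
  also have "\<dots> \<le> l2norm \<eta> * (opnorm Q * l2norm \<eta>)"
    by (rule mult_left_mono[OF opnorm_bound[OF Qb \<eta>] l2norm_nonneg])
  also have "\<dots> \<le> l2norm \<eta> * (Kp * (opnorm z)\<^sup>2 * l2norm \<eta>)"
  proof -
    have "opnorm Q \<le> Kp * (opnorm z)\<^sup>2" unfolding Q_def Kp_def
      by (rule order_trans[OF b\<theta>[OF z F]]) (simp add: mult_right_mono)
    then show ?thesis by (intro mult_left_mono mult_right_mono l2norm_nonneg)
  qed
  also have "\<dots> = Kp * (opnorm z)\<^sup>2 * (l2norm \<eta>)\<^sup>2" by (simp add: power2_eq_square)
  finally show ?thesis .
qed

lemma Rop_bound:
  assumes c: "cmod c = 1" and x: "x \<in> M" and \<eta>: "\<eta> \<in> l2" and F: "finite F" "F \<subseteq> \<Lambda>"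
  shows "(\<Sum>j\<in>F. sqn (Rop \<psi> \<theta> c j x \<eta>)) \<le> Kp * (opnorm x)\<^sup>2 * (l2norm \<eta>)\<^sup>2"
proof -
  have P: "\<psi> j (adj x) \<in> bop" if "j \<in> F" for j using \<psi>N[OF _ M_adj[OF x]] N_bop F that by blast
  have Q: "\<theta> j x \<in> bop" if "j \<in> F" for j using \<theta>N[OF _ x] N_bop F that by blast
  have "(\<Sum>j\<in>F. sqn (Rop \<psi> \<theta> c j x \<eta>)) \<le> (\<Sum>j\<in>F. (1/2) * sqn (adj (\<psi> j (adj x)) \<eta>) + (1/2) * sqn (\<theta> j x \<eta>))"
  proof (rule sum_mono)
    fix j assume j: "j \<in> F"
    have "sqn (Rop \<psi> \<theta> c j x \<eta>) \<le> 2 * (cmod (1/2))\<^sup>2 * sqn (adj (\<psi> j (adj x)) \<eta>) + 2 * (cmod (cnj c/2))\<^sup>2 * sqn (\<theta> j x \<eta>)"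
      unfolding Rop_def by (rule sqn_lin_le[OF adj_l2[OF P[OF j] \<eta>] bop_l2[OF Q[OF j] \<eta>]])
    also have "\<dots> = (1/2) * sqn (adj (\<psi> j (adj x)) \<eta>) + (1/2) * sqn (\<theta> j x \<eta>)"
      using c by (simp add: norm_divide power2_eq_square)
    finally show "sqn (Rop \<psi> \<theta> c j x \<eta>) \<le> (1/2) * sqn (adj (\<psi> j (adj x)) \<eta>) + (1/2) * sqn (\<theta> j x \<eta>)" .
  qed
  also have "\<dots> = (1/2) * (\<Sum>j\<in>F. sqn (adj (\<psi> j (adj x)) \<eta>)) + (1/2) * (\<Sum>j\<in>F. sqn (\<theta> j x \<eta>))"
    by (simp add: sum.distrib sum_distrib_left)
  also have "\<dots> \<le> (1/2) * (Kp * (opnorm (adj x))\<^sup>2 * (l2norm \<eta>)\<^sup>2) + (1/2) * (Kp * (opnorm x)\<^sup>2 * (l2norm \<eta>)\<^sup>2)"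
    by (intro add_mono mult_left_mono sum_sqn_psi sum_sqn_theta M_adj x \<eta> F) auto
  also have "\<dots> \<le> (1/2) * (Kp * (opnorm x)\<^sup>2 * (l2norm \<eta>)\<^sup>2) + (1/2) * (Kp * (opnorm x)\<^sup>2 * (l2norm \<eta>)\<^sup>2)"
  proof -
    have "opnorm (adj x) \<le> opnorm x" by (rule opnorm_adj[OF M_bop[OF x]])
    then have "(opnorm (adj x))\<^sup>2 \<le> (opnorm x)\<^sup>2"
      by (intro power_mono opnorm_nonneg adj_bop M_bop x)
    then show ?thesis using Kp0 by (intro add_mono mult_left_mono mult_right_mono) auto
  qed
  also have "\<dots> = Kp * (opnorm x)\<^sup>2 * (l2norm \<eta>)\<^sup>2" by simp
  finally show ?thesis .
qed

lemma g_props: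
  assumes c: "cmod c = 1" and x: "x \<in> M" and y: "y \<in> M" and \<xi>: "\<xi> \<in> l2"
  shows "gmap \<Lambda> \<psi> \<theta> c x y \<xi> \<in> l2"
    and "l2norm (gmap \<Lambda> \<psi> \<theta> c x y \<xi>) \<le> Kp * opnorm x * opnorm y * l2norm \<xi>"
    and "\<And>\<eta>. \<eta> \<in> l2 \<Longrightarrow> ((\<lambda>j. cinner \<eta> (Lop \<psi> \<theta> c j x (Rop \<psi> \<theta> c j y \<xi>))) has_sum cinner \<eta> (gmap \<Lambda> \<psi> \<theta> c x y \<xi>)) \<Lambda>"
proof -
  define v where "v j = Lop \<psi> \<theta> c j x (Rop \<psi> \<theta> c j y \<xi>)" for j
  have g: "gmap \<Lambda> \<psi> \<theta> c x y \<xi> = (\<lambda>l. \<Sum>\<^sub>\<infinity>j\<in>\<Lambda>. v j l)"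
    using \<xi> by (simp add: gmap_def v_def)
  have vl: "v j \<in> l2" if "j \<in> \<Lambda>" for j
    unfolding v_def by (intro bop_l2[OF Lop_bop] bop_l2[OF Rop_bop] that x y \<xi>)
  have B: "Kp * opnorm x * opnorm y * l2norm \<xi> \<ge> 0"
    by (intro mult_nonneg_nonneg Kp0 opnorm_nonneg M_bop x y l2norm_nonneg)
  have bnd: "(\<Sum>j\<in>F. cmod (cinner \<eta> (v j))) \<le> Kp * opnorm x * opnorm y * l2norm \<xi> * l2norm \<eta>"
    if \<eta>: "\<eta> \<in> l2" and F: "finite F" "F \<subseteq> \<Lambda>" for \<eta> F
  proof -
    have "(\<Sum>j\<in>F. cmod (cinner \<eta> (v j))) = (\<Sum>j\<in>F. cmod (cinner (Rop \<psi> \<theta> c j (adj x) \<eta>) (Rop \<psi> \<theta> c j y \<xi>)))"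
      unfolding v_def using F by (intro sum.cong refl) (auto simp: Lop_adj x \<eta> bop_l2[OF Rop_bop] y \<xi>)
    also have "\<dots> \<le> (\<Sum>j\<in>F. \<bar>l2norm (Rop \<psi> \<theta> c j (adj x) \<eta>)\<bar> * \<bar>l2norm (Rop \<psi> \<theta> c j y \<xi>)\<bar>)"
      using F by (intro sum_mono) (auto intro!: cauchy_schwarz bop_l2[OF Rop_bop] M_adj x y \<eta> \<xi>)
    also have "\<dots> \<le> L2_set (\<lambda>j. l2norm (Rop \<psi> \<theta> c j (adj x) \<eta>)) F * L2_set (\<lambda>j. l2norm (Rop \<psi> \<theta> c j y \<xi>)) F"
      by (rule L2_set_mult_ineq)
    also have "\<dots> \<le> sqrt (Kp * (opnorm (adj x))\<^sup>2 * (l2norm \<eta>)\<^sup>2) * sqrt (Kp * (opnorm y)\<^sup>2 * (l2norm \<xi>)\<^sup>2)"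
      unfolding L2_set_def l2norm_sq
      by (intro mult_mono real_sqrt_le_mono Rop_bound[unfolded l2norm_sq] c M_adj x y \<eta> \<xi> F
          sum_nonneg sqn_nonneg mult_nonneg_nonneg Kp0 zero_le_power2 real_sqrt_ge_zero)
    also have "\<dots> = (sqrt Kp * opnorm (adj x) * l2norm \<eta>) * (sqrt Kp * opnorm y * l2norm \<xi>)"
      by (simp add: sqrt_prod Kp0 opnorm_nonneg adj_bop M_bop x y l2norm_nonneg)
    also have "\<dots> \<le> (sqrt Kp * opnorm x * l2norm \<eta>) * (sqrt Kp * opnorm y * l2norm \<xi>)"
      using opnorm_adj[OF M_bop[OF x]]
      by (intro mult_right_mono mult_left_mono) (auto simp: Kp0 opnorm_nonneg M_bop y l2norm_nonneg)
    also have "\<dots> = Kp * opnorm x * opnorm y * l2norm \<xi> * l2norm \<eta>"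
      using Kp0 by (simp add: algebra_simps)
    finally show ?thesis .
  qed
  note W = weak_sum[of \<Lambda> v, OF vl B bnd]
  show "gmap \<Lambda> \<psi> \<theta> c x y \<xi> \<in> l2" unfolding g using W(1) by blast
  show "l2norm (gmap \<Lambda> \<psi> \<theta> c x y \<xi>) \<le> Kp * opnorm x * opnorm y * l2norm \<xi>" unfolding g using W(2) by blast
  show "\<And>\<eta>. \<eta> \<in> l2 \<Longrightarrow> ((\<lambda>j. cinner \<eta> (Lop \<psi> \<theta> c j x (Rop \<psi> \<theta> c j y \<xi>))) has_sum cinner \<eta> (gmap \<Lambda> \<psi> \<theta> c x y \<xi>)) \<Lambda>"
    unfolding g using W(3) by (simp add: v_def)
qed

lemma g_coord:
  assumes c: "cmod c = 1" and x: "x \<in> M" and y: "y \<in> M" and \<xi>: "\<xi> \<in> l2"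
  shows "((\<lambda>j. Lop \<psi> \<theta> c j x (Rop \<psi> \<theta> c j y \<xi>) l) has_sum gmap \<Lambda> \<psi> \<theta> c x y \<xi> l) \<Lambda>"
  using g_props(3)[OF c x y \<xi> l2_ev[of l]] by (simp add: cinner_ev)

lemma g_bop:
  assumes c: "cmod c = 1" and x: "x \<in> M" and y: "y \<in> M"
  shows "gmap \<Lambda> \<psi> \<theta> c x y \<in> bop"
proof (rule bopI)
  show "\<And>\<xi>. \<xi> \<in> l2 \<Longrightarrow> gmap \<Lambda> \<psi> \<theta> c x y \<xi> \<in> l2" using g_props(1)[OF c x y] .
  show "\<And>\<xi>. \<xi> \<in> l2 \<Longrightarrow> l2norm (gmap \<Lambda> \<psi> \<theta> c x y \<xi>) \<le> (Kp * opnorm x * opnorm y) * l2norm \<xi>"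
    using g_props(2)[OF c x y] by simp
  show "\<And>\<xi>. \<xi> \<notin> l2 \<Longrightarrow> gmap \<Lambda> \<psi> \<theta> c x y \<xi> = (\<lambda>i. 0)" by (simp add: gmap_def)
  fix \<xi> \<eta> :: "'b vec" and a assume \<xi>: "\<xi> \<in> l2" and \<eta>: "\<eta> \<in> l2"
  have ab: "(\<lambda>i. a * \<xi> i + \<eta> i) \<in> l2" using l2_lin[OF \<xi> \<eta>, of a 1] by simp
  show "gmap \<Lambda> \<psi> \<theta> c x y (\<lambda>i. a * \<xi> i + \<eta> i) = (\<lambda>i. a * gmap \<Lambda> \<psi> \<theta> c x y \<xi> i + gmap \<Lambda> \<psi> \<theta> c x y \<eta> i)"
  proof
    fix l
    have h1: "((\<lambda>j. a * Lop \<psi> \<theta> c j x (Rop \<psi> \<theta> c j y \<xi>) l + Lop \<psi> \<theta> c j x (Rop \<psi> \<theta> c j y \<eta>) l) has_sum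
        (a * gmap \<Lambda> \<psi> \<theta> c x y \<xi> l + gmap \<Lambda> \<psi> \<theta> c x y \<eta> l)) \<Lambda>"
      by (intro has_sum_add has_sum_cmult_right g_coord c x y \<xi> \<eta>)
    have e: "Lop \<psi> \<theta> c j x (Rop \<psi> \<theta> c j y (\<lambda>i. a * \<xi> i + \<eta> i)) l =
        a * Lop \<psi> \<theta> c j x (Rop \<psi> \<theta> c j y \<xi>) l + Lop \<psi> \<theta> c j x (Rop \<psi> \<theta> c j y \<eta>) l" if j: "j \<in> \<Lambda>" for j
    proof -
      have R: "Rop \<psi> \<theta> c j y (\<lambda>i. a * \<xi> i + \<eta> i) = (\<lambda>i. a * Rop \<psi> \<theta> c j y \<xi> i + Rop \<psi> \<theta> c j y \<eta> i)"
        by (rule bop_lin[OF Rop_bop[OF j y] \<xi> \<eta>])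
      show ?thesis unfolding R
        by (subst bop_lin[OF Lop_bop[OF j x] bop_l2[OF Rop_bop[OF j y] \<xi>] bop_l2[OF Rop_bop[OF j y] \<eta>]]) simp
    qed
    have h2: "((\<lambda>j. Lop \<psi> \<theta> c j x (Rop \<psi> \<theta> c j y (\<lambda>i. a * \<xi> i + \<eta> i)) l) has_sum
        (a * gmap \<Lambda> \<psi> \<theta> c x y \<xi> l + gmap \<Lambda> \<psi> \<theta> c x y \<eta> l)) \<Lambda>"
      by (rule has_sum_congI[OF h1]) (simp add: e)
    show "gmap \<Lambda> \<psi> \<theta> c x y (\<lambda>i. a * \<xi> i + \<eta> i) l = a * gmap \<Lambda> \<psi> \<theta> c x y \<xi> l + gmap \<Lambda> \<psi> \<theta> c x y \<eta> l"
      using has_sum_unique[OF g_coord[OF c x y ab] h2] .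
  qed
qed

lemma g_N:
  assumes c: "cmod c = 1" and x: "x \<in> M" and y: "y \<in> M"
  shows "gmap \<Lambda> \<psi> \<theta> c x y \<in> N"
proof -
  have e: "commutant (commutant N) = N" using vnN by (simp add: von_neumann_algebra_def)
  have gb: "gmap \<Lambda> \<psi> \<theta> c x y \<in> bop" by (rule g_bop[OF c x y])
  have "T \<circ> gmap \<Lambda> \<psi> \<theta> c x y = gmap \<Lambda> \<psi> \<theta> c x y \<circ> T" if T: "T \<in> commutant N" for T
  proof
    fix \<xi> :: "'b vec"
    have Tb: "T \<in> bop" using T commutant_bop by blast
    show "(T \<circ> gmap \<Lambda> \<psi> \<theta> c x y) \<xi> = (gmap \<Lambda> \<psi> \<theta> c x y \<circ> T) \<xi>"
    proof (cases "\<xi> \<in> l2")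
      case True
      have T\<xi>: "T \<xi> \<in> l2" by (rule bop_l2[OF Tb True])
      show ?thesis
      proof (simp, rule ext)
        fix l
        define w where "w = gmap \<Lambda> \<psi> \<theta> c x y \<xi>"
        have w: "w \<in> l2" unfolding w_def by (rule g_props(1)[OF c x y True])
        have ae: "adj T (ev l) \<in> l2" by (rule adj_l2[OF Tb l2_ev])
        have H1: "((\<lambda>j. cinner (adj T (ev l)) (Lop \<psi> \<theta> c j x (Rop \<psi> \<theta> c j y \<xi>))) has_sum cinner (adj T (ev l)) w) \<Lambda>"
          unfolding w_def by (rule g_props(3)[OF c x y True ae])
        have H2: "cinner (adj T (ev l)) w = T w l"
          using adj_right[OF Tb l2_ev w] by (simp add: cinner_ev)
        have H3: "cinner (adj T (ev l)) (Lop \<psi> \<theta> c j x (Rop \<psi> \<theta> c j y \<xi>)) = Lop \<psi> \<theta> c j x (Rop \<psi> \<theta> c j y (T \<xi>)) l"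
          if j: "j \<in> \<Lambda>" for j
        proof -
          have v: "Lop \<psi> \<theta> c j x (Rop \<psi> \<theta> c j y \<xi>) \<in> l2"
            by (intro bop_l2[OF Lop_bop[OF j x]] bop_l2[OF Rop_bop[OF j y]] True)
          have "cinner (adj T (ev l)) (Lop \<psi> \<theta> c j x (Rop \<psi> \<theta> c j y \<xi>)) = T (Lop \<psi> \<theta> c j x (Rop \<psi> \<theta> c j y \<xi>)) l"
            using adj_right[OF Tb l2_ev v] by (simp add: cinner_ev)
          also have "\<dots> = Lop \<psi> \<theta> c j x (Rop \<psi> \<theta> c j y (T \<xi>)) l"
            using vn_commute[OF vnN LopN[OF j x] T] vn_commute[OF vnN RopN[OF j y] T] by simp
          finally show ?thesis .
        qed
        have "((\<lambda>j. Lop \<psi> \<theta> c j x (Rop \<psi> \<theta> c j y (T \<xi>)) l) has_sum T w l) \<Lambda>"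
          by (rule has_sum_congI[OF H1[unfolded H2] H3])
        then show "T (gmap \<Lambda> \<psi> \<theta> c x y \<xi>) l = gmap \<Lambda> \<psi> \<theta> c x y (T \<xi>) l"
          using has_sum_unique[OF _ g_coord[OF c x y T\<xi>]] unfolding w_def by blast
      qed
    next
      case False
      then show ?thesis using bop_off[OF Tb False] bop_zero[OF Tb] bop_zero[OF gb]
        by (simp add: gmap_def)
    qed
  qed
  then have "gmap \<Lambda> \<psi> \<theta> c x y \<in> commutant (commutant N)"
    unfolding commutant_def[of "commutant N"] using gb by auto
  then show ?thesis using e by simp
qed

lemma M_comb1: "x \<in> M \<Longrightarrow> x' \<in> M \<Longrightarrow> (\<lambda>\<xi> i. a * x \<xi> i + x' \<xi> i) \<in> M"
  using vn_comb[OF vnM, of x x' a 1] by simp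

lemma Lop_lin:
  assumes j: "j \<in> \<Lambda>" and x: "x \<in> M" and x': "x' \<in> M"
  shows "Lop \<psi> \<theta> c j (\<lambda>\<xi> i. a * x \<xi> i + x' \<xi> i) = (\<lambda>v l. a * Lop \<psi> \<theta> c j x v l + Lop \<psi> \<theta> c j x' v l)"
proof -
  have 1: "adj (\<lambda>\<xi> i. a * x \<xi> i + x' \<xi> i) = (\<lambda>\<xi> i. cnj a * adj x \<xi> i + adj x' \<xi> i)"
    by (rule adj_comb1[OF M_bop[OF x] M_bop[OF x']])
  have 2: "\<theta> j (\<lambda>\<xi> i. cnj a * adj x \<xi> i + adj x' \<xi> i) = (\<lambda>\<xi> i. cnj a * \<theta> j (adj x) \<xi> i + \<theta> j (adj x') \<xi> i)"
    by (rule \<theta>lin[OF j M_adj[OF x] M_adj[OF x']])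
  have 3: "adj (\<lambda>\<xi> i. cnj a * \<theta> j (adj x) \<xi> i + \<theta> j (adj x') \<xi> i) = (\<lambda>\<xi> i. a * adj (\<theta> j (adj x)) \<xi> i + adj (\<theta> j (adj x')) \<xi> i)"
    using adj_comb1[OF N_bop[OF \<theta>N[OF j M_adj[OF x]]] N_bop[OF \<theta>N[OF j M_adj[OF x']]], of "cnj a"] by simp
  have 4: "\<psi> j (\<lambda>\<xi> i. a * x \<xi> i + x' \<xi> i) = (\<lambda>\<xi> i. a * \<psi> j x \<xi> i + \<psi> j x' \<xi> i)"
    by (rule \<psi>lin[OF j x x'])
  show ?thesis unfolding Lop_def 1 2 3 4 by (simp add: algebra_simps)
qed

lemma Rop_lin:
  assumes j: "j \<in> \<Lambda>" and y: "y \<in> M" and y': "y' \<in> M"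
  shows "Rop \<psi> \<theta> c j (\<lambda>\<xi> i. a * y \<xi> i + y' \<xi> i) = (\<lambda>v l. a * Rop \<psi> \<theta> c j y v l + Rop \<psi> \<theta> c j y' v l)"
proof -
  have 1: "adj (\<lambda>\<xi> i. a * y \<xi> i + y' \<xi> i) = (\<lambda>\<xi> i. cnj a * adj y \<xi> i + adj y' \<xi> i)"
    by (rule adj_comb1[OF M_bop[OF y] M_bop[OF y']])
  have 2: "\<psi> j (\<lambda>\<xi> i. cnj a * adj y \<xi> i + adj y' \<xi> i) = (\<lambda>\<xi> i. cnj a * \<psi> j (adj y) \<xi> i + \<psi> j (adj y') \<xi> i)"
    by (rule \<psi>lin[OF j M_adj[OF y] M_adj[OF y']])
  have 3: "adj (\<lambda>\<xi> i. cnj a * \<psi> j (adj y) \<xi> i + \<psi> j (adj y') \<xi> i) = (\<lambda>\<xi> i. a * adj (\<psi> j (adj y)) \<xi> i + adj (\<psi> j (adj y')) \<xi> i)"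
    using adj_comb1[OF N_bop[OF \<psi>N[OF j M_adj[OF y]]] N_bop[OF \<psi>N[OF j M_adj[OF y']]], of "cnj a"] by simp
  have 4: "\<theta> j (\<lambda>\<xi> i. a * y \<xi> i + y' \<xi> i) = (\<lambda>\<xi> i. a * \<theta> j y \<xi> i + \<theta> j y' \<xi> i)"
    by (rule \<theta>lin[OF j y y'])
  show ?thesis unfolding Rop_def 1 2 3 4 by (simp add: algebra_simps)
qed

lemma g_linx:
  assumes c: "cmod c = 1" and x: "x \<in> M" and x': "x' \<in> M" and y: "y \<in> M"
  shows "gmap \<Lambda> \<psi> \<theta> c (\<lambda>\<xi> i. a * x \<xi> i + x' \<xi> i) y = (\<lambda>\<xi> i. a * gmap \<Lambda> \<psi> \<theta> c x y \<xi> i + gmap \<Lambda> \<psi> \<theta> c x' y \<xi> i)"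
proof (rule ext)
  fix \<xi> :: "'b vec"
  show "gmap \<Lambda> \<psi> \<theta> c (\<lambda>\<xi> i. a * x \<xi> i + x' \<xi> i) y \<xi> = (\<lambda>i. a * gmap \<Lambda> \<psi> \<theta> c x y \<xi> i + gmap \<Lambda> \<psi> \<theta> c x' y \<xi> i)"
  proof (cases "\<xi> \<in> l2")
    case True
    show ?thesis
    proof
      fix l
      have h1: "((\<lambda>j. a * Lop \<psi> \<theta> c j x (Rop \<psi> \<theta> c j y \<xi>) l + Lop \<psi> \<theta> c j x' (Rop \<psi> \<theta> c j y \<xi>) l) has_sum
        (a * gmap \<Lambda> \<psi> \<theta> c x y \<xi> l + gmap \<Lambda> \<psi> \<theta> c x' y \<xi> l)) \<Lambda>"
        by (intro has_sum_add has_sum_cmult_right g_coord c x x' y True)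
      have h2: "((\<lambda>j. Lop \<psi> \<theta> c j (\<lambda>\<xi> i. a * x \<xi> i + x' \<xi> i) (Rop \<psi> \<theta> c j y \<xi>) l) has_sum
        (a * gmap \<Lambda> \<psi> \<theta> c x y \<xi> l + gmap \<Lambda> \<psi> \<theta> c x' y \<xi> l)) \<Lambda>"
        by (rule has_sum_congI[OF h1]) (simp add: Lop_lin[OF _ x x'])
      show "gmap \<Lambda> \<psi> \<theta> c (\<lambda>\<xi> i. a * x \<xi> i + x' \<xi> i) y \<xi> l = a * gmap \<Lambda> \<psi> \<theta> c x y \<xi> l + gmap \<Lambda> \<psi> \<theta> c x' y \<xi> l"
        using has_sum_unique[OF g_coord[OF c M_comb1[OF x x'] y True] h2] .
    qed
  next
    case False then show ?thesis by (simp add: gmap_def)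
  qed
qed

lemma g_liny:
  assumes c: "cmod c = 1" and x: "x \<in> M" and y: "y \<in> M" and y': "y' \<in> M"
  shows "gmap \<Lambda> \<psi> \<theta> c x (\<lambda>\<xi> i. a * y \<xi> i + y' \<xi> i) = (\<lambda>\<xi> i. a * gmap \<Lambda> \<psi> \<theta> c x y \<xi> i + gmap \<Lambda> \<psi> \<theta> c x y' \<xi> i)"
proof (rule ext)
  fix \<xi> :: "'b vec"
  show "gmap \<Lambda> \<psi> \<theta> c x (\<lambda>\<xi> i. a * y \<xi> i + y' \<xi> i) \<xi> = (\<lambda>i. a * gmap \<Lambda> \<psi> \<theta> c x y \<xi> i + gmap \<Lambda> \<psi> \<theta> c x y' \<xi> i)"
  proof (cases "\<xi> \<in> l2")
    case True
    show ?thesis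
    proof
      fix l
      have h1: "((\<lambda>j. a * Lop \<psi> \<theta> c j x (Rop \<psi> \<theta> c j y \<xi>) l + Lop \<psi> \<theta> c j x (Rop \<psi> \<theta> c j y' \<xi>) l) has_sum
        (a * gmap \<Lambda> \<psi> \<theta> c x y \<xi> l + gmap \<Lambda> \<psi> \<theta> c x y' \<xi> l)) \<Lambda>"
        by (intro has_sum_add has_sum_cmult_right g_coord c x y y' True)
      have e: "Lop \<psi> \<theta> c j x (Rop \<psi> \<theta> c j (\<lambda>\<xi> i. a * y \<xi> i + y' \<xi> i) \<xi>) l =
          a * Lop \<psi> \<theta> c j x (Rop \<psi> \<theta> c j y \<xi>) l + Lop \<psi> \<theta> c j x (Rop \<psi> \<theta> c j y' \<xi>) l" if j: "j \<in> \<Lambda>" for j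
        unfolding Rop_lin[OF j y y']
        by (subst bop_lin[OF Lop_bop[OF j x] bop_l2[OF Rop_bop[OF j y] True] bop_l2[OF Rop_bop[OF j y'] True]]) simp
      have h2: "((\<lambda>j. Lop \<psi> \<theta> c j x (Rop \<psi> \<theta> c j (\<lambda>\<xi> i. a * y \<xi> i + y' \<xi> i) \<xi>) l) has_sum
        (a * gmap \<Lambda> \<psi> \<theta> c x y \<xi> l + gmap \<Lambda> \<psi> \<theta> c x y' \<xi> l)) \<Lambda>"
        by (rule has_sum_congI[OF h1]) (simp add: e)
      show "gmap \<Lambda> \<psi> \<theta> c x (\<lambda>\<xi> i. a * y \<xi> i + y' \<xi> i) \<xi> l = a * gmap \<Lambda> \<psi> \<theta> c x y \<xi> l + gmap \<Lambda> \<psi> \<theta> c x y' \<xi> l"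
        using has_sum_unique[OF g_coord[OF c x M_comb1[OF y y'] True] h2] .
    qed
  next
    case False then show ?thesis by (simp add: gmap_def)
  qed
qed

lemma g_cont:
  assumes c: "cmod c = 1"
  shows "cont_bilinear M N (gmap \<Lambda> \<psi> \<theta> c)"
  unfolding cont_bilinear_def bilinear_map_def op_add_def op_scale_def
proof (intro conjI ballI allI exI[of _ Kp])
  show "\<And>x y. x \<in> M \<Longrightarrow> y \<in> M \<Longrightarrow> gmap \<Lambda> \<psi> \<theta> c x y \<in> N" using g_N[OF c] by blast
  show "\<And>x x' y a. x \<in> M \<Longrightarrow> x' \<in> M \<Longrightarrow> y \<in> M \<Longrightarrow> gmap \<Lambda> \<psi> \<theta> c (\<lambda>\<xi> i. a * x \<xi> i + x' \<xi> i) y = (\<lambda>\<xi> i. a * gmap \<Lambda> \<psi> \<theta> c x y \<xi> i + gmap \<Lambda> \<psi> \<theta> c x' y \<xi> i)"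
    using g_linx[OF c] by blast
  show "\<And>x y y' a. x \<in> M \<Longrightarrow> y \<in> M \<Longrightarrow> y' \<in> M \<Longrightarrow> gmap \<Lambda> \<psi> \<theta> c x (\<lambda>\<xi> i. a * y \<xi> i + y' \<xi> i) = (\<lambda>\<xi> i. a * gmap \<Lambda> \<psi> \<theta> c x y \<xi> i + gmap \<Lambda> \<psi> \<theta> c x y' \<xi> i)"
    using g_liny[OF c] by blast
  fix x y assume x: "x \<in> M" and y: "y \<in> M"
  show "opnorm (gmap \<Lambda> \<psi> \<theta> c x y) \<le> Kp * opnorm x * opnorm y"
    by (rule opnorm_le) (use g_props(2)[OF c x y] Kp0 opnorm_nonneg[OF M_bop[OF x]] opnorm_nonneg[OF M_bop[OF y]] in auto)
qed

lemma Lop_Rop_expand: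
  assumes j: "j \<in> \<Lambda>" and x: "x \<in> M" and y: "y \<in> M" and \<xi>: "\<xi> \<in> l2"
  shows "Lop \<psi> \<theta> c j x (Rop \<psi> \<theta> c j y \<xi>) l =
     (1/4) * \<psi> j x (adj (\<psi> j (adj y)) \<xi>) l + (cnj c/4) * \<psi> j x (\<theta> j y \<xi>) l
   + (c/4) * adj (\<theta> j (adj x)) (adj (\<psi> j (adj y)) \<xi>) l + (c * cnj c/4) * adj (\<theta> j (adj x)) (\<theta> j y \<xi>) l"
proof -
  have P: "\<psi> j x \<in> bop" using \<psi>N[OF j x] N_bop by blast
  have A: "adj (\<theta> j (adj x)) \<in> bop" using adj_bop[OF N_bop[OF \<theta>N[OF j M_adj[OF x]]]] .
  have U: "adj (\<psi> j (adj y)) \<xi> \<in> l2" using adj_l2[OF N_bop[OF \<psi>N[OF j M_adj[OF y]]] \<xi>] .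
  have V: "\<theta> j y \<xi> \<in> l2" using bop_l2[OF N_bop[OF \<theta>N[OF j y]] \<xi>] .
  show ?thesis
    unfolding Lop_def Rop_def bop_lin2[OF P U V] bop_lin2[OF A U V]
    by (simp add: algebra_simps)
qed

lemma g_cp:
  assumes c: "cmod c = 1"
  shows "cp_bilinear M (gmap \<Lambda> \<psi> \<theta> c)"
  unfolding cp_bilinear_def mpos_def Let_def
proof (intro allI ballI impI)
  fix n X and \<xi> :: "nat \<Rightarrow> 'b vec"
  assume X: "X \<in> mats n M" and \<xi>: "\<forall>j<n. \<xi> j \<in> l2"
  have XM: "X i k \<in> M" if "i < n" "k < n" for i k using X that by (auto simp: mats_def)
  have \<xi>': "\<xi> i \<in> l2" if "i < n" for i using \<xi> that by blast
  define g where "g = gmap \<Lambda> \<psi> \<theta> c"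
  define a where "a i k m = Rop \<psi> \<theta> c m (adj (X i k)) (\<xi> i)" for i k m
  have al2: "a i k m \<in> l2" if "i < n" "k < n" "m \<in> \<Lambda>" for i k m
    unfolding a_def by (intro bop_l2[OF Rop_bop] that M_adj XM \<xi>')
  have gl2: "g (X i k) (adj (X j k)) (\<xi> j) \<in> l2" if "i < n" "j < n" "k < n" for i j k
    unfolding g_def by (intro g_props(1)[OF c] XM M_adj \<xi>' that)
  have C: "((\<lambda>m. cinner (a i k m) (a j k m)) has_sum cinner (\<xi> i) (g (X i k) (adj (X j k)) (\<xi> j))) \<Lambda>"
    if ijk: "i < n" "j < n" "k < n" for i j k
  proof -
    have H: "((\<lambda>m. cinner (\<xi> i) (Lop \<psi> \<theta> c m (X i k) (Rop \<psi> \<theta> c m (adj (X j k)) (\<xi> j)))) has_sum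
        cinner (\<xi> i) (g (X i k) (adj (X j k)) (\<xi> j))) \<Lambda>"
      unfolding g_def by (rule g_props(3)[OF c XM[OF ijk(1,3)] M_adj[OF XM[OF ijk(2,3)]] \<xi>'[OF ijk(2)] \<xi>'[OF ijk(1)]])
    show ?thesis
    proof (rule has_sum_congI[OF H])
      fix m assume m: "m \<in> \<Lambda>"
      show "cinner (\<xi> i) (Lop \<psi> \<theta> c m (X i k) (Rop \<psi> \<theta> c m (adj (X j k)) (\<xi> j))) = cinner (a i k m) (a j k m)"
        unfolding a_def
        by (rule Lop_adj[OF m XM[OF ijk(1,3)] \<xi>'[OF ijk(1)] bop_l2[OF Rop_bop[OF m M_adj[OF XM[OF ijk(2,3)]]] \<xi>'[OF ijk(2)]]])
    qed
  qed
  define q where "q = (\<Sum>i<n. cinner (\<xi> i) (mat_apply n (bil_ampl n g X (madj X)) \<xi> i))"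
  have q: "q = (\<Sum>i<n. \<Sum>j<n. \<Sum>k<n. cinner (\<xi> i) (g (X i k) (adj (X j k)) (\<xi> j)))"
  proof -
    have "cinner (\<xi> i) (mat_apply n (bil_ampl n g X (madj X)) \<xi> i) = (\<Sum>j<n. \<Sum>k<n. cinner (\<xi> i) (g (X i k) (adj (X j k)) (\<xi> j)))"
      if i: "i < n" for i
    proof -
      have mm: "mat_apply n (bil_ampl n g X (madj X)) \<xi> i = (\<lambda>l. \<Sum>j<n. (\<lambda>l. \<Sum>k<n. g (X i k) (adj (X j k)) (\<xi> j) l) l)"
        by (simp add: mat_apply_def bil_ampl_def madj_def)
      have "cinner (\<xi> i) (mat_apply n (bil_ampl n g X (madj X)) \<xi> i) = (\<Sum>j<n. cinner (\<xi> i) (\<lambda>l. \<Sum>k<n. g (X i k) (adj (X j k)) (\<xi> j) l))"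
        unfolding mm by (rule cinner_sum[OF \<xi>'[OF i]]) (auto intro!: l2_sum gl2 i)
      also have "\<dots> = (\<Sum>j<n. \<Sum>k<n. cinner (\<xi> i) (g (X i k) (adj (X j k)) (\<xi> j)))"
        by (intro sum.cong refl cinner_sum[OF \<xi>'[OF i]]) (auto intro!: gl2 i)
      finally show ?thesis .
    qed
    then show ?thesis unfolding q_def by (intro sum.cong) auto
  qed
  have hs: "((\<lambda>m. \<Sum>i<n. \<Sum>j<n. \<Sum>k<n. cinner (a i k m) (a j k m)) has_sum q) \<Lambda>"
    unfolding q by (intro has_sum_finsum C) auto
  define r where "r m = (\<Sum>k<n. sqn (\<lambda>l. \<Sum>i<n. a i k m l))" for m
  have pt: "(\<Sum>i<n. \<Sum>j<n. \<Sum>k<n. cinner (a i k m) (a j k m)) = complex_of_real (r m)" if m: "m \<in> \<Lambda>" for m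
  proof -
    have "(\<Sum>i<n. \<Sum>j<n. \<Sum>k<n. cinner (a i k m) (a j k m)) = (\<Sum>i<n. \<Sum>k<n. \<Sum>j<n. cinner (a i k m) (a j k m))"
      by (intro sum.cong refl sum.swap)
    also have "\<dots> = (\<Sum>k<n. \<Sum>i<n. \<Sum>j<n. cinner (a i k m) (a j k m))"
      by (rule sum.swap)
    also have "\<dots> = (\<Sum>k<n. cinner (\<lambda>l. \<Sum>i<n. a i k m l) (\<lambda>l. \<Sum>j<n. a j k m l))"
    proof (intro sum.cong refl)
      fix k assume k: "k \<in> {..<n}"
      have "(\<Sum>i<n. \<Sum>j<n. cinner (a i k m) (a j k m)) = (\<Sum>i<n. cinner (a i k m) (\<lambda>l. \<Sum>j<n. a j k m l))"
        using k m by (intro sum.cong refl cinner_sum[symmetric] al2) auto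
      also have "\<dots> = cinner (\<lambda>l. \<Sum>i<n. a i k m l) (\<lambda>l. \<Sum>j<n. a j k m l)"
        using k m by (intro cinner_sum1[symmetric] l2_sum al2) auto
      finally show "(\<Sum>i<n. \<Sum>j<n. cinner (a i k m) (a j k m)) = cinner (\<lambda>l. \<Sum>i<n. a i k m l) (\<lambda>l. \<Sum>j<n. a j k m l)" .
    qed
    also have "\<dots> = (\<Sum>k<n. complex_of_real (sqn (\<lambda>l. \<Sum>i<n. a i k m l)))"
      using m by (intro sum.cong refl cinner_self l2_sum al2) auto
    also have "\<dots> = complex_of_real (r m)" by (simp add: r_def)
    finally show ?thesis .
  qed
  have hs2: "((\<lambda>m. complex_of_real (r m)) has_sum q) \<Lambda>"
    by (rule has_sum_congI[OF hs pt])
  have "((\<lambda>m. Im (complex_of_real (r m))) has_sum Im q) \<Lambda>" by (rule has_sum_Im[OF hs2])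
  then have "((\<lambda>m. 0) has_sum Im q) \<Lambda>" by simp
  moreover have "((\<lambda>m. 0) has_sum 0) \<Lambda>" by simp
  ultimately have imq: "Im q = 0" by (rule has_sum_unique)
  have "((\<lambda>m. Re (complex_of_real (r m))) has_sum Re q) \<Lambda>" by (rule has_sum_Re[OF hs2])
  then have "(r has_sum Re q) \<Lambda>" by simp
  then have req: "Re q \<ge> 0" by (rule has_sum_nonneg) (simp add: r_def sum_nonneg sqn_nonneg)
  show "Im (\<Sum>i<n. cinner (\<xi> i) (mat_apply n (bil_ampl n (gmap \<Lambda> \<psi> \<theta> c) X (madj X)) \<xi> i)) = 0 \<and>
        0 \<le> Re (\<Sum>i<n. cinner (\<xi> i) (mat_apply n (bil_ampl n (gmap \<Lambda> \<psi> \<theta> c) X (madj X)) \<xi> i))"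
    using imq req unfolding q_def g_def by simp
qed

lemma decomp_pt:
  assumes j: "j \<in> \<Lambda>" and x: "x \<in> M" and y: "y \<in> M" and \<xi>: "\<xi> \<in> l2"
  shows "Lop \<psi> \<theta> 1 j x (Rop \<psi> \<theta> 1 j y \<xi>) l - Lop \<psi> \<theta> (-1) j x (Rop \<psi> \<theta> (-1) j y \<xi>) l
    + \<i> * (Lop \<psi> \<theta> \<i> j x (Rop \<psi> \<theta> \<i> j y \<xi>) l - Lop \<psi> \<theta> (-\<i>) j x (Rop \<psi> \<theta> (-\<i>) j y \<xi>) l)
    = \<psi> j x (\<theta> j y \<xi>) l"
  unfolding Lop_Rop_expand[OF assms] by (rule comb4)

lemma decomp:
  assumes x: "x \<in> M" and y: "y \<in> M" and \<xi>: "\<xi> \<in> l2"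
    and h: "((\<lambda>j. \<psi> j x (\<theta> j y \<xi>) l) has_sum z) \<Lambda>"
  shows "z = gmap \<Lambda> \<psi> \<theta> 1 x y \<xi> l - gmap \<Lambda> \<psi> \<theta> (-1) x y \<xi> l
    + \<i> * (gmap \<Lambda> \<psi> \<theta> \<i> x y \<xi> l - gmap \<Lambda> \<psi> \<theta> (-\<i>) x y \<xi> l)"
proof -
  have c1: "cmod (1::complex) = 1" and c2: "cmod (-1::complex) = 1"
    and c3: "cmod \<i> = 1" and c4: "cmod (-\<i>) = 1" by simp_all
  have H: "((\<lambda>j. Lop \<psi> \<theta> 1 j x (Rop \<psi> \<theta> 1 j y \<xi>) l - Lop \<psi> \<theta> (-1) j x (Rop \<psi> \<theta> (-1) j y \<xi>) l
    + \<i> * (Lop \<psi> \<theta> \<i> j x (Rop \<psi> \<theta> \<i> j y \<xi>) l - Lop \<psi> \<theta> (-\<i>) j x (Rop \<psi> \<theta> (-\<i>) j y \<xi>) l))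
    has_sum (gmap \<Lambda> \<psi> \<theta> 1 x y \<xi> l - gmap \<Lambda> \<psi> \<theta> (-1) x y \<xi> l
    + \<i> * (gmap \<Lambda> \<psi> \<theta> \<i> x y \<xi> l - gmap \<Lambda> \<psi> \<theta> (-\<i>) x y \<xi> l))) \<Lambda>"
    by (intro has_sum_add has_sum_diff has_sum_cmult_right g_coord c1 c2 c3 c4 x y \<xi>)
  have H2: "((\<lambda>j. \<psi> j x (\<theta> j y \<xi>) l) has_sum (gmap \<Lambda> \<psi> \<theta> 1 x y \<xi> l - gmap \<Lambda> \<psi> \<theta> (-1) x y \<xi> l
    + \<i> * (gmap \<Lambda> \<psi> \<theta> \<i> x y \<xi> l - gmap \<Lambda> \<psi> \<theta> (-\<i>) x y \<xi> l))) \<Lambda>"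
    by (rule has_sum_congI[OF H decomp_pt[OF _ x y \<xi>]])
  show ?thesis by (rule has_sum_unique[OF h H2])
qed

end



theorem lemma5p1:
  fixes M :: "'a op set" and N :: "'b op set"
    and \<phi> :: "'a op \<Rightarrow> 'a op \<Rightarrow> 'b op"
    and \<Lambda> :: "'c set" and \<psi> \<theta> :: "'c \<Rightarrow> 'a op \<Rightarrow> 'b op" and K :: real
  assumes "von_neumann_algebra M" and "von_neumann_algebra N"
    and "cb_bilinear M N \<phi>"
    and "type_B_factorization M N \<phi> \<Lambda> \<psi> \<theta> K"
  shows "\<exists>\<phi>1 \<phi>2 \<phi>3 \<phi>4 :: 'a op \<Rightarrow> 'a op \<Rightarrow> 'b op.
           (\<forall>g\<in>{\<phi>1, \<phi>2, \<phi>3, \<phi>4}. cont_bilinear M N g \<and> cp_bilinear M g)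
         \<and> (\<forall>x\<in>M. \<forall>y\<in>M. \<phi> x y =
              (\<lambda>\<xi> l. \<phi>1 x y \<xi> l - \<phi>2 x y \<xi> l + \<i> * (\<phi>3 x y \<xi> l - \<phi>4 x y \<xi> l)))"
proof -
  note vnM = assms(1) and vnN = assms(2)
  note T = assms(4)[unfolded type_B_factorization_def]
  have T1: "\<forall>j\<in>\<Lambda>. cb_linear M N (\<psi> j) \<and> cb_linear M N (\<theta> j)" using T by (rule conjunct1)
  have T2: "\<forall>x\<in>M. \<forall>F. finite F \<and> F \<subseteq> \<Lambda> \<longrightarrow>
        opnorm (\<lambda>\<xi> l. \<Sum>j\<in>F. (\<psi> j x \<circ> adj (\<psi> j x)) \<xi> l) \<le> K * (opnorm x)\<^sup>2"
    using T by (rule conjunct1[OF conjunct2])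
  have T3: "\<forall>y\<in>M. \<forall>F. finite F \<and> F \<subseteq> \<Lambda> \<longrightarrow>
        opnorm (\<lambda>\<xi> l. \<Sum>j\<in>F. (adj (\<theta> j y) \<circ> \<theta> j y) \<xi> l) \<le> K * (opnorm y)\<^sup>2"
    using T by (rule conjunct1[OF conjunct2[OF conjunct2]])
  have T4: "\<forall>x\<in>M. \<forall>y\<in>M. \<forall>\<xi>\<in>l2. \<forall>\<eta>\<in>l2.
        ((\<lambda>j. cinner \<eta> (\<psi> j x (\<theta> j y \<xi>))) has_sum cinner \<eta> (\<phi> x y \<xi>)) \<Lambda>"
    using T by (rule conjunct2[OF conjunct2[OF conjunct2]])
  have lin\<psi>: "\<And>j. j \<in> \<Lambda> \<Longrightarrow> linear_map M N (\<psi> j)"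
    using T1 by (simp add: cb_linear_def)
  have lin\<theta>: "\<And>j. j \<in> \<Lambda> \<Longrightarrow> linear_map M N (\<theta> j)"
    using T1 by (simp add: cb_linear_def)
  have b\<psi>: "\<And>x F. x \<in> M \<Longrightarrow> finite F \<Longrightarrow> F \<subseteq> \<Lambda> \<Longrightarrow>
              opnorm (\<lambda>\<xi> l. \<Sum>j\<in>F. (\<psi> j x \<circ> adj (\<psi> j x)) \<xi> l) \<le> K * (opnorm x)\<^sup>2"
    using T2 by simp
  have b\<theta>: "\<And>y F. y \<in> M \<Longrightarrow> finite F \<Longrightarrow> F \<subseteq> \<Lambda> \<Longrightarrow>
              opnorm (\<lambda>\<xi> l. \<Sum>j\<in>F. (adj (\<theta> j y) \<circ> \<theta> j y) \<xi> l) \<le> K * (opnorm y)\<^sup>2"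
    using T3 by simp
  have hs: "\<And>x y \<xi> \<eta>. x \<in> M \<Longrightarrow> y \<in> M \<Longrightarrow> \<xi> \<in> l2 \<Longrightarrow> \<eta> \<in> l2 \<Longrightarrow>
        ((\<lambda>j. cinner \<eta> (\<psi> j x (\<theta> j y \<xi>))) has_sum cinner \<eta> (\<phi> x y \<xi>)) \<Lambda>"
    using T4 by simp
  have \<phi>N: "\<And>x y. x \<in> M \<Longrightarrow> y \<in> M \<Longrightarrow> \<phi> x y \<in> N"
    using assms(3) by (auto simp: cb_bilinear_def bilinear_map_def)
  have G1: "cont_bilinear M N (gmap \<Lambda> \<psi> \<theta> c)" if "cmod c = 1" for c
    by (rule g_cont[OF vnM vnN, where K=K]) (rule lin\<psi> lin\<theta> b\<psi> b\<theta> that; assumption)+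
  have G2: "cp_bilinear M (gmap \<Lambda> \<psi> \<theta> c)" if "cmod c = 1" for c
    by (rule g_cp[OF vnM vnN, where K=K]) (rule lin\<psi> lin\<theta> b\<psi> b\<theta> that; assumption)+
  have G: "cont_bilinear M N (gmap \<Lambda> \<psi> \<theta> c) \<and> cp_bilinear M (gmap \<Lambda> \<psi> \<theta> c)" if "cmod c = 1" for c
    using G1[OF that] G2[OF that] by blast
  have c1: "cmod (1::complex) = 1" and c2: "cmod (-1::complex) = 1"
    and c3: "cmod \<i> = 1" and c4: "cmod (-\<i>) = 1" by simp_all
  show ?thesis
  proof (rule exI[of _ "gmap \<Lambda> \<psi> \<theta> 1"], rule exI[of _ "gmap \<Lambda> \<psi> \<theta> (-1)"],
      rule exI[of _ "gmap \<Lambda> \<psi> \<theta> \<i>"], rule exI[of _ "gmap \<Lambda> \<psi> \<theta> (-\<i>)"], rule conjI)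
    show "\<forall>g\<in>{gmap \<Lambda> \<psi> \<theta> 1, gmap \<Lambda> \<psi> \<theta> (-1), gmap \<Lambda> \<psi> \<theta> \<i>, gmap \<Lambda> \<psi> \<theta> (-\<i>)}.
        cont_bilinear M N g \<and> cp_bilinear M g"
      using G[OF c1] G[OF c2] G[OF c3] G[OF c4] by auto
  next
    show "\<forall>x\<in>M. \<forall>y\<in>M. \<phi> x y = (\<lambda>\<xi> l. gmap \<Lambda> \<psi> \<theta> 1 x y \<xi> l - gmap \<Lambda> \<psi> \<theta> (-1) x y \<xi> l
        + \<i> * (gmap \<Lambda> \<psi> \<theta> \<i> x y \<xi> l - gmap \<Lambda> \<psi> \<theta> (-\<i>) x y \<xi> l))"
    proof (intro ballI)
    fix x y assume x: "x \<in> M" and y: "y \<in> M"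
    show "\<phi> x y = (\<lambda>\<xi> l. gmap \<Lambda> \<psi> \<theta> 1 x y \<xi> l - gmap \<Lambda> \<psi> \<theta> (-1) x y \<xi> l
        + \<i> * (gmap \<Lambda> \<psi> \<theta> \<i> x y \<xi> l - gmap \<Lambda> \<psi> \<theta> (-\<i>) x y \<xi> l))"
    proof (intro ext)
      fix \<xi> :: "'b vec" and l
      show "\<phi> x y \<xi> l = gmap \<Lambda> \<psi> \<theta> 1 x y \<xi> l - gmap \<Lambda> \<psi> \<theta> (-1) x y \<xi> l
        + \<i> * (gmap \<Lambda> \<psi> \<theta> \<i> x y \<xi> l - gmap \<Lambda> \<psi> \<theta> (-\<i>) x y \<xi> l)"
      proof (cases "\<xi> \<in> l2")
        case True
        have H: "((\<lambda>j. \<psi> j x (\<theta> j y \<xi>) l) has_sum \<phi> x y \<xi> l) \<Lambda>"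
          using hs[OF x y True l2_ev[of l]] by (simp add: cinner_ev)
        show ?thesis by (rule decomp[where M=M and N=N and \<Lambda>=\<Lambda> and \<psi>=\<psi> and \<theta>=\<theta> and K=K and x=x and y=y and \<xi>=\<xi> and l=l and z="\<phi> x y \<xi> l", OF vnM vnN _ _ _ _ x y True H]) (rule lin\<psi> lin\<theta> b\<psi> b\<theta>; assumption)+
      next
        case False
        have "\<phi> x y \<in> bop" using \<phi>N[OF x y] vn_bop[OF vnN] by blast
        then have "\<phi> x y \<xi> = (\<lambda>i. 0)" using bop_off False by blast
        then show ?thesis using False by (simp add: gmap_def)
      qed
    qed
  qed
  qed
qed


end
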